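(* Assume the jump-amplitude density is Gaussian, $\varphi$ the centered normal density with variance $\beta>0$. Then there exist constants $c>0$ and $K>0$ such that for all $t>0$ and $x,y\in\mathbb{R}$ with $\frac{|y-x|}{t}\ge K$, $$\mathbb{P}\big(|X^x_t-x|>|y-x|\big)\le 2\exp\Big(-c\,|y-x|\sqrt{\ln\big(\tfrac{|y-x|}{t}\big)}\Big).$$
   Context: Setting: $x\in\mathbb{R}$, $(B_t)_{t\ge0}$ is a standard one-dimensional Brownian motion, $(Y_i)_{i\ge1}$ are i.i.d. real random variables with probability density $\varphi$, and $(T_i)_{i\ge1}$ are the arrival times of a Poisson process of rate $\lambda>0$; $B$, $(Y_i)$ and $(T_i)$ are mutually independent. The coefficients $\sigma,b:\mathbb{R}\to\mathbb{R}$ are bounded and twice differentiable with bounded derivatives of all orders, and $\inf_y|\sigma(y)|\ge\rho>0$. $X^x$ is the unique càdlàg adapted solution of $X^x_t=x+\int_0^t\sigma(X^x_s)dB_s+\int_0^tb(X^x_s)ds+\sum_{i\ge1}Y_i\mathbf 1_{T_i\le t}$. *)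

theory Defs
  imports "HOL-Probability.Probability"
begin

definition gen_sigma :: "'a measure \<Rightarrow> ('i \<Rightarrow> 'a \<Rightarrow> real) \<Rightarrow> 'i set \<Rightarrow> 'a set set" where
  "gen_sigma M Z I = sigma_sets (space M) (\<Union>i\<in>I. {Z i -` A \<inter> space M | A. A \<in> sets borel})"

definition std_brownian_motion :: "'a measure \<Rightarrow> (real \<Rightarrow> 'a \<Rightarrow> real) \<Rightarrow> bool" where
  "std_brownian_motion M B \<longleftrightarrow>
     (\<forall>t. B t \<in> borel_measurable M) \<and>
     (\<forall>\<omega>\<in>space M. B 0 \<omega> = 0 \<and> continuous_on {0..} (\<lambda>t. B t \<omega>)) \<and>
     (\<forall>s t. 0 \<le> s \<and> s < t \<longrightarrow>
        distributed M lborel (\<lambda>\<omega>. B t \<omega> - B s \<omega>) (normal_density 0 (sqrt (t - s)))) \<and>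
     (\<forall>(ts :: nat \<Rightarrow> real) n. 0 \<le> ts 0 \<and> (\<forall>i<n. ts i < ts (Suc i)) \<longrightarrow>
        prob_space.indep_vars M (\<lambda>_. borel) (\<lambda>i \<omega>. B (ts (Suc i)) \<omega> - B (ts i) \<omega>) {..<n})"

text \<open>Arrival times of a Poisson process of rate l, built from i.i.d. Exp(l)
  inter-arrival times E: T i = E 0 + ... + E i (the (i+1)-th arrival).\<close>
definition arrival_time :: "(nat \<Rightarrow> 'a \<Rightarrow> real) \<Rightarrow> nat \<Rightarrow> 'a \<Rightarrow> real" where
  "arrival_time E i \<omega> = (\<Sum>j\<le>i. E j \<omega>)"

definition jump_part :: "(nat \<Rightarrow> 'a \<Rightarrow> real) \<Rightarrow> (nat \<Rightarrow> 'a \<Rightarrow> real) \<Rightarrow> real \<Rightarrow> 'a \<Rightarrow> real" where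
  "jump_part E Y t \<omega> = (\<Sum>i\<in>{i. arrival_time E i \<omega> \<le> t}. Y i \<omega>)"

definition jump_setting ::
  "'a measure \<Rightarrow> (real \<Rightarrow> 'a \<Rightarrow> real) \<Rightarrow> (nat \<Rightarrow> 'a \<Rightarrow> real) \<Rightarrow> (nat \<Rightarrow> 'a \<Rightarrow> real)
     \<Rightarrow> (real \<Rightarrow> real) \<Rightarrow> real \<Rightarrow> bool" where
  "jump_setting M B Y E \<phi> l \<longleftrightarrow>
     prob_space M \<and> l > 0 \<and>
     std_brownian_motion M B \<and>
     prob_space.indep_vars M (\<lambda>_. borel) Y UNIV \<and>
     (\<forall>i. distributed M lborel (Y i) \<phi>) \<and>
     prob_space.indep_vars M (\<lambda>_. borel) E UNIV \<and>
     (\<forall>i. distributed M lborel (E i) (exponential_density l)) \<and>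
     prob_space.indep_sets M
       (\<lambda>k::nat. if k = 0 then gen_sigma M B {0..}
                 else if k = 1 then gen_sigma M Y UNIV else gen_sigma M E UNIV) {0, 1, 2}"

definition C2_bounded :: "(real \<Rightarrow> real) \<Rightarrow> bool" where
  "C2_bounded f \<longleftrightarrow> (\<exists>f1 f2.
      (\<forall>y. (f has_real_derivative f1 y) (at y)) \<and>
      (\<forall>y. (f1 has_real_derivative f2 y) (at y)) \<and>
      bounded (range f) \<and> bounded (range f1) \<and> bounded (range f2))"

definition cadlag_on_nonneg :: "(real \<Rightarrow> real) \<Rightarrow> bool" where
  "cadlag_on_nonneg f \<longleftrightarrow>
     (\<forall>t\<ge>0. continuous (at_right t) f \<and> (t > 0 \<longrightarrow> (\<exists>L. (f \<longlongrightarrow> L) (at_left t))))"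

definition noise_filtration ::
  "'a measure \<Rightarrow> (real \<Rightarrow> 'a \<Rightarrow> real) \<Rightarrow> (nat \<Rightarrow> 'a \<Rightarrow> real) \<Rightarrow> (nat \<Rightarrow> 'a \<Rightarrow> real)
     \<Rightarrow> real \<Rightarrow> 'a measure" where
  "noise_filtration M B Y E t = sigma (space M)
     (gen_sigma M (\<lambda>(k::bool, s). if k then B s else jump_part E Y s) (UNIV \<times> {0..t}))"

definition adapted_completed ::
  "'a measure \<Rightarrow> (real \<Rightarrow> 'a measure) \<Rightarrow> (real \<Rightarrow> 'a \<Rightarrow> real) \<Rightarrow> bool" where
  "adapted_completed M F X \<longleftrightarrow>
     (\<forall>t\<ge>0. \<exists>Z \<in> borel_measurable (F t). AE \<omega> in M. X t \<omega> = Z \<omega>)"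

definition ito_riemann_sum ::
  "(real \<Rightarrow> real) \<Rightarrow> (real \<Rightarrow> 'a \<Rightarrow> real) \<Rightarrow> (real \<Rightarrow> 'a \<Rightarrow> real) \<Rightarrow> real \<Rightarrow> nat \<Rightarrow> 'a \<Rightarrow> real" where
  "ito_riemann_sum \<sigma> X B t n \<omega> =
     (\<Sum>k<2^n. \<sigma> (X (real k * t / 2^n) \<omega>) *
                 (B (real (Suc k) * t / 2^n) \<omega> - B (real k * t / 2^n) \<omega>))"

text \<open>The Ito integral is characterised as the limit in probability of the left-point
  Riemann sums (valid for cadlag adapted integrands, Protter Thm II.21).\<close>
definition sde_solution ::
  "'a measure \<Rightarrow> (real \<Rightarrow> 'a \<Rightarrow> real) \<Rightarrow> (nat \<Rightarrow> 'a \<Rightarrow> real) \<Rightarrow> (nat \<Rightarrow> 'a \<Rightarrow> real)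
     \<Rightarrow> (real \<Rightarrow> real) \<Rightarrow> (real \<Rightarrow> real) \<Rightarrow> real \<Rightarrow> (real \<Rightarrow> 'a \<Rightarrow> real) \<Rightarrow> bool" where
  "sde_solution M B Y E \<sigma> b x X \<longleftrightarrow>
     (\<forall>t. X t \<in> borel_measurable M) \<and>
     (\<forall>\<omega>\<in>space M. cadlag_on_nonneg (\<lambda>t. X t \<omega>)) \<and>
     adapted_completed M (noise_filtration M B Y E) X \<and>
     (\<forall>t\<ge>0. \<forall>\<epsilon>>0.
        (\<lambda>n. measure M {\<omega>\<in>space M.
            \<bar>ito_riemann_sum \<sigma> X B t n \<omega> -
             (X t \<omega> - x - (LINT s:{0..t}|lborel. b (X s \<omega>)) - jump_part E Y t \<omega>)\<bar> > \<epsilon>})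
        \<longlonglongrightarrow> 0)"

end

theory Submission
  imports Defs
begin

lemma density_integral_one:
  assumes "prob_space (density lborel (\<lambda>x. ennreal (f x)))" "f \<in> borel_measurable borel"
  shows "(\<integral>\<^sup>+x. ennreal (f x) \<partial>lborel) = 1"
proof -
  interpret P: prob_space "density lborel (\<lambda>x. ennreal (f x))" by fact
  have "emeasure (density lborel (\<lambda>x. ennreal (f x))) UNIV = 1"
    using P.emeasure_space_1 by simp
  then show ?thesis using assms(2) by (simp add: emeasure_density)
qed

lemma gauss_mgf:
  assumes s: "s > 0"
  shows "(\<integral>\<^sup>+u. ennreal (exp (c * u)) * ennreal (normal_density 0 s u) \<partial>lborel) = ennreal (exp (c^2* s^2/2))"
proof -
  have eq: "exp (c * u) * normal_density 0 s u = exp (c^2* s^2/2) * normal_density (c* s^2) s u" for u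
  proof -
    have "c * u + (- ((u - 0)^2)/ (2 * s^2)) = c^2* s^2/2 + (- ((u - c * s^2)^2)/ (2 * s^2))"
      using s by (simp add: field_simps power2_eq_square)
    then have "exp (c * u) * exp (- ((u - 0)^2)/ (2 * s^2)) = exp (c^2* s^2/2) * exp (- ((u - c * s^2)^2)/ (2 * s^2))"
      by (simp add: exp_add[symmetric])
    then show ?thesis unfolding normal_density_def by (simp add: algebra_simps)
  qed
  have "(\<integral>\<^sup>+u. ennreal (exp (c * u)) * ennreal (normal_density 0 s u) \<partial>lborel)
      = (\<integral>\<^sup>+u. ennreal (exp (c^2* s^2/2)) * ennreal (normal_density (c* s^2) s u) \<partial>lborel)"
    by (intro nn_integral_cong) (simp add: ennreal_mult[symmetric] eq)
  also have "\<dots> = ennreal (exp (c^2* s^2/2)) * (\<integral>\<^sup>+u. ennreal (normal_density (c* s^2) s u) \<partial>lborel)"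
    by (rule nn_integral_cmult) simp
  also have "(\<integral>\<^sup>+u. ennreal (normal_density (c* s^2) s u) \<partial>lborel) = 1"
    by (rule density_integral_one[OF prob_space_normal_density]) (use s in auto)
  finally show ?thesis by simp
qed

lemma expo_laplace:
  assumes l: "l > 0" and th: "\<theta> \<ge> 0"
  shows "(\<integral>\<^sup>+x. ennreal (exp (-\<theta> * x)) * ennreal (exponential_density l x) \<partial>lborel) = ennreal (l/(l+\<theta>))"
proof -
  have eq: "exp (- (\<theta> * x)) * exponential_density l x = l/(l+\<theta>) * exponential_density (l+\<theta>) x" for x
  proof -
    have "exp (- (\<theta> * x)) * exp (- x * l) = exp (- x * (l+\<theta>))" by (simp add: exp_add[symmetric] algebra_simps)
    then show ?thesis using l th unfolding exponential_density_def by (auto simp: field_simps)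
  qed
  have "(\<integral>\<^sup>+x. ennreal (exp (-\<theta> * x)) * ennreal (exponential_density l x) \<partial>lborel)
      = (\<integral>\<^sup>+x. ennreal (l/(l+\<theta>)) * ennreal (exponential_density (l+\<theta>) x) \<partial>lborel)"
  proof (intro nn_integral_cong)
    fix x
    have "ennreal (exp (-\<theta> * x)) * ennreal (exponential_density l x) = ennreal (exp (- (\<theta> * x)) * exponential_density l x)"
      using l by (simp add: ennreal_mult exponential_density_nonneg)
    also have "\<dots> = ennreal (l/(l+\<theta>) * exponential_density (l+\<theta>) x)" by (simp only: eq)
    also have "\<dots> = ennreal (l/(l+\<theta>)) * ennreal (exponential_density (l+\<theta>) x)"
      by (rule ennreal_mult) (use l th in \<open>auto simp: exponential_density_nonneg\<close>)
    finally show "ennreal (exp (-\<theta> * x)) * ennreal (exponential_density l x) = ennreal (l/(l+\<theta>)) * ennreal (exponential_density (l+\<theta>) x)" .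
  qed
  also have "\<dots> = ennreal (l/(l+\<theta>)) * (\<integral>\<^sup>+x. ennreal (exponential_density (l+\<theta>) x) \<partial>lborel)"
    by (rule nn_integral_cmult) simp
  also have "(\<integral>\<^sup>+x. ennreal (exponential_density (l+\<theta>) x) \<partial>lborel) = 1"
    by (rule density_integral_one[OF prob_space_exponential_density]) (use l th in auto)
  finally show ?thesis by simp
qed

lemma (in prob_space) chernoff_one:
  assumes Z: "Z \<in> borel_measurable M" and v: "v > 0" and a: "a \<ge> 0"
    and mgf: "(\<integral>\<^sup>+\<omega>. ennreal (exp ((a/v) * Z \<omega>)) \<partial>M) \<le> ennreal (exp ((a/v)^2 * v/2))"
  shows "prob {\<omega>\<in>space M. Z \<omega> > a} \<le> exp (- (a^2)/(2 * v))"
proof -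
  define \<theta> where "\<theta> = a/v"
  have th: "\<theta> \<ge> 0" using a v by (simp add: \<theta>_def)
  have "emeasure M {\<omega>\<in>space M. Z \<omega> > a} = (\<integral>\<^sup>+\<omega>. indicator {\<omega>\<in>space M. Z \<omega> > a} \<omega> \<partial>M)"
    using Z by (simp add: nn_integral_indicator)
  also have "\<dots> \<le> (\<integral>\<^sup>+\<omega>. ennreal (exp (-\<theta> * a)) * ennreal (exp (\<theta> * Z \<omega>)) \<partial>M)"
  proof (intro nn_integral_mono)
    fix \<omega> assume "\<omega> \<in> space M"
    show "indicator {\<omega>\<in>space M. Z \<omega> > a} \<omega> \<le> ennreal (exp (-\<theta> * a)) * ennreal (exp (\<theta> * Z \<omega>))"
    proof (cases "Z \<omega> > a")
      case True
      then have "\<theta> * a \<le> \<theta> * Z \<omega>" using th by (simp add: mult_left_mono)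
      then have "1 \<le> exp (-\<theta> * a) * exp (\<theta> * Z \<omega>)" by (simp add: exp_add[symmetric])
      then show ?thesis using True \<open>\<omega> \<in> space M\<close> by (simp add: ennreal_mult[symmetric])
    qed simp
  qed
  also have "\<dots> = ennreal (exp (-\<theta> * a)) * (\<integral>\<^sup>+\<omega>. ennreal (exp (\<theta> * Z \<omega>)) \<partial>M)"
    using Z by (intro nn_integral_cmult) simp
  also have "\<dots> \<le> ennreal (exp (-\<theta> * a)) * ennreal (exp (\<theta>^2 * v/2))"
    using mgf unfolding \<theta>_def by (intro mult_left_mono) auto
  also have "\<dots> = ennreal (exp (- (a^2)/(2 * v)))"
  proof -
    have "-\<theta> * a + \<theta>^2 * v/2 = - (a^2)/(2 * v)" using v unfolding \<theta>_def by (simp add: field_simps power2_eq_square)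
    then show ?thesis by (simp add: ennreal_mult[symmetric] exp_add[symmetric])
  qed
  finally show ?thesis using Z by (simp add: emeasure_eq_measure)
qed

lemma (in prob_space) chernoff:
  assumes Z: "Z \<in> borel_measurable M" and v: "v > 0" and a: "a \<ge> 0"
    and mgf: "\<And>\<theta>. (\<integral>\<^sup>+\<omega>. ennreal (exp (\<theta> * Z \<omega>)) \<partial>M) \<le> ennreal (exp (\<theta>^2 * v/2))"
  shows "prob {\<omega>\<in>space M. \<bar>Z \<omega>\<bar> > a} \<le> 2 * exp (- (a^2)/(2 * v))"
proof -
  have 1: "prob {\<omega>\<in>space M. Z \<omega> > a} \<le> exp (- (a^2)/(2 * v))"
    by (rule chernoff_one[OF Z v a mgf])
  have mgf2: "(\<integral>\<^sup>+\<omega>. ennreal (exp ((a/v) * (- Z \<omega>))) \<partial>M) \<le> ennreal (exp ((a/v)^2 * v/2))"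
    using mgf[of "-(a/v)"] by simp
  have 2: "prob {\<omega>\<in>space M. - Z \<omega> > a} \<le> exp (- (a^2)/(2 * v))"
    by (rule chernoff_one[OF _ v a mgf2]) (use Z in simp)
  have "{\<omega>\<in>space M. \<bar>Z \<omega>\<bar> > a} \<subseteq> {\<omega>\<in>space M. Z \<omega> > a} \<union> {\<omega>\<in>space M. - Z \<omega> > a}" by auto
  then have "prob {\<omega>\<in>space M. \<bar>Z \<omega>\<bar> > a} \<le> prob ({\<omega>\<in>space M. Z \<omega> > a} \<union> {\<omega>\<in>space M. - Z \<omega> > a})"
    using Z by (intro finite_measure_mono) auto
  also have "\<dots> \<le> prob {\<omega>\<in>space M. Z \<omega> > a} + prob {\<omega>\<in>space M. - Z \<omega> > a}"
    using Z by (intro measure_Un_le) auto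
  finally show ?thesis using 1 2 by simp
qed


lemma arrival_time_measurable[measurable]:
  assumes [measurable]: "\<And>i. E i \<in> borel_measurable N"
  shows "arrival_time E i \<in> borel_measurable N"
  unfolding arrival_time_def[abs_def] by measurable

lemma jump_part_measurable:
  assumes [measurable]: "\<And>i. Y i \<in> borel_measurable N" "\<And>i. E i \<in> borel_measurable N"
  shows "jump_part E Y t \<in> borel_measurable N"
proof -
  define f where "f m \<omega> = (if (\<exists>m. \<forall>i. arrival_time E i \<omega> \<le> t \<longrightarrow> i < m)
     then (\<Sum>i<m. if arrival_time E i \<omega> \<le> t then Y i \<omega> else 0) else 0)" for m \<omega>
  have fm[measurable]: "f m \<in> borel_measurable N" for m
    unfolding f_def by measurable
  show ?thesis
  proof (rule borel_measurable_LIMSEQ_real[OF _ fm])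
    fix \<omega>
    let ?S = "{i. arrival_time E i \<omega> \<le> t}"
    show "(\<lambda>m. f m \<omega>) \<longlonglongrightarrow> jump_part E Y t \<omega>"
    proof (cases "\<exists>m. \<forall>i. arrival_time E i \<omega> \<le> t \<longrightarrow> i < m")
      case True
      then obtain m0 where m0: "\<forall>i. arrival_time E i \<omega> \<le> t \<longrightarrow> i < m0" by blast
      have "f m \<omega> = jump_part E Y t \<omega>" if "m \<ge> m0" for m
      proof -
        have "f m \<omega> = (\<Sum>i<m. if arrival_time E i \<omega> \<le> t then Y i \<omega> else 0)"
          using True by (simp add: f_def)
        also have "\<dots> = (\<Sum>i\<in>{..<m} \<inter> ?S. Y i \<omega>)"
          by (simp add: sum.inter_restrict)
        also have "{..<m} \<inter> ?S = ?S" using m0 that by auto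
        finally show ?thesis by (simp add: jump_part_def)
      qed
      then show ?thesis
        by (intro tendsto_eventually) (auto simp: eventually_sequentially)
    next
      case False
      then have "infinite ?S"
        by (auto simp: finite_nat_set_iff_bounded)
      moreover have "f m \<omega> = 0" for m using False unfolding f_def by meson
      ultimately show ?thesis by (simp add: jump_part_def)
    qed
  qed
qed


context prob_space begin

lemma prob_mono_AE:
  assumes "AE x in M. x \<in> A \<longrightarrow> x \<in> B" "B \<in> sets M"
  shows "prob A \<le> prob B"
proof (cases "A \<in> sets M")
  case True
  have "emeasure M A \<le> emeasure M B" by (rule emeasure_mono_AE[OF assms])
  then show ?thesis using True assms(2) by (simp add: emeasure_eq_measure)
next
  case False
  then show ?thesis by (simp add: measure_notin_sets)
qed

lemma expo_pos_AE:
  assumes D: "\<And>i. distributed M lborel (E i) (exponential_density l)" and l: "l > 0"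
  shows "AE \<omega> in M. \<forall>i::nat. E i \<omega> > 0"
proof (subst AE_all_countable, intro allI)
  fix i
  have m[measurable]: "E i \<in> borel_measurable M" using D[of i] by (simp add: distributed_def)
  have "prob {x\<in>space M. E i x \<le> 0} = 1 - exp (- 0 * l)"
    using exponential_distributedD_le[OF D[of i] _ l, of 0] by simp
  then have "{x\<in>space M. E i x \<le> 0} \<in> null_sets M"
    by (simp add: null_sets_def emeasure_eq_measure)
  then show "AE \<omega> in M. E i \<omega> > 0"
    by (rule AE_I') auto
qed

lemma arrival_laplace:
  assumes I: "indep_vars (\<lambda>_. borel) E UNIV"
    and D: "\<And>i. distributed M lborel (E i) (exponential_density l)" and l: "l > 0" and th: "\<theta> \<ge> 0"
  shows "prob {\<omega>\<in>space M. arrival_time E n \<omega> \<le> t} \<le> exp (\<theta> * t) * (l/(l+\<theta>))^(Suc n)"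
proof -
  have m[measurable]: "E i \<in> borel_measurable M" for i using D[of i] by (simp add: distributed_def)
  have lap: "(\<integral>\<^sup>+\<omega>. ennreal (exp (- \<theta> * E i \<omega>)) \<partial>M) = ennreal (l/(l+\<theta>))" for i
  proof -
    have "(\<integral>\<^sup>+\<omega>. ennreal (exp (- \<theta> * E i \<omega>)) \<partial>M) = (\<integral>\<^sup>+x. ennreal (exponential_density l x) * ennreal (exp (- \<theta> * x)) \<partial>lborel)"
      by (rule distributed_nn_integral[OF D[of i], symmetric]) simp
    also have "\<dots> = ennreal (l/(l+\<theta>))"
      using expo_laplace[OF l th] by (simp add: mult.commute)
    finally show ?thesis .
  qed
  have ind: "indep_vars (\<lambda>_. borel) (\<lambda>i \<omega>. ennreal (exp (- \<theta> * E i \<omega>))) {..n}"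
    by (rule indep_vars_compose2[OF indep_vars_subset[OF I], where Y="\<lambda>i x. ennreal (exp (- \<theta> * x))"]) auto
  have prodeq: "(\<integral>\<^sup>+\<omega>. (\<Prod>i\<in>{..n}. ennreal (exp (- \<theta> * E i \<omega>))) \<partial>M) = (\<Prod>i\<in>{..n}. \<integral>\<^sup>+\<omega>. ennreal (exp (- \<theta> * E i \<omega>)) \<partial>M)"
    by (rule indep_vars_nn_integral[OF _ ind]) auto
  have "emeasure M {\<omega>\<in>space M. arrival_time E n \<omega> \<le> t} = (\<integral>\<^sup>+\<omega>. indicator {\<omega>\<in>space M. arrival_time E n \<omega> \<le> t} \<omega> \<partial>M)"
    by (simp add: nn_integral_indicator)
  also have "\<dots> \<le> (\<integral>\<^sup>+\<omega>. ennreal (exp (\<theta> * t)) * (\<Prod>i\<in>{..n}. ennreal (exp (- \<theta> * E i \<omega>))) \<partial>M)"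
  proof (intro nn_integral_mono)
    fix \<omega> assume \<omega>: "\<omega> \<in> space M"
    have pe: "(\<Prod>i\<in>{..n}. ennreal (exp (- \<theta> * E i \<omega>))) = ennreal (exp (- \<theta> * arrival_time E n \<omega>))"
      by (simp add: prod_ennreal exp_sum[symmetric] arrival_time_def sum_distrib_left sum_negf)
    show "indicator {\<omega>\<in>space M. arrival_time E n \<omega> \<le> t} \<omega> \<le> ennreal (exp (\<theta> * t)) * (\<Prod>i\<in>{..n}. ennreal (exp (- \<theta> * E i \<omega>)))"
    proof (cases "arrival_time E n \<omega> \<le> t")
      case True
      then have "\<theta> * arrival_time E n \<omega> \<le> \<theta> * t" using th by (simp add: mult_left_mono)
      then have "1 \<le> exp (\<theta> * t) * exp (- \<theta> * arrival_time E n \<omega>)" by (simp add: exp_add[symmetric])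
      then show ?thesis using True \<omega> unfolding pe by (simp add: ennreal_mult[symmetric])
    qed simp
  qed
  also have "\<dots> = ennreal (exp (\<theta> * t)) * (\<integral>\<^sup>+\<omega>. (\<Prod>i\<in>{..n}. ennreal (exp (- \<theta> * E i \<omega>))) \<partial>M)"
    by (intro nn_integral_cmult) simp
  also have "\<dots> = ennreal (exp (\<theta> * t)) * ennreal ((l/(l+\<theta>))^(Suc n))"
    unfolding prodeq lap prod_constant card_atMost using l th by (subst ennreal_power) auto
  also have "\<dots> = ennreal (exp (\<theta> * t) * (l/(l+\<theta>))^(Suc n))"
    using l th by (intro ennreal_mult[symmetric]) auto
  finally show ?thesis using l th by (simp add: emeasure_eq_measure ennreal_le_iff del: power_Suc)
qed

lemma gauss_sum_tail:
  fixes Y :: "nat \<Rightarrow> 'a \<Rightarrow> real" and m :: nat and \<beta> a :: real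
  assumes I: "indep_vars (\<lambda>_. borel) Y UNIV" and b: "\<beta> > 0"
    and D: "\<And>i. distributed M lborel (Y i) (normal_density 0 (sqrt \<beta>))" and m: "m > 0" and a: "a \<ge> 0"
  shows "prob {\<omega>\<in>space M. \<bar>\<Sum>i<m. Y i \<omega>\<bar> > a} \<le> 2 * exp (- (a^2) / (2 * (real m * \<beta>)))"
proof -
  have mY[measurable]: "Y i \<in> borel_measurable M" for i using D[of i] by (simp add: distributed_def)
  have DS: "distributed M lborel (\<lambda>x. \<Sum>i<m. Y i x) (normal_density (\<Sum>i<m. 0) (sqrt (\<Sum>i<m. (sqrt \<beta>)^2)))"
    using m b D indep_vars_subset[OF I, of "{..<m}"] by (intro sum_indep_normal[of "{..<m}" Y "\<lambda>_. sqrt \<beta>" "\<lambda>_. 0"]) auto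
  have s: "sqrt (\<Sum>i<m. (sqrt \<beta>)^2) = sqrt (real m * \<beta>)" using b by simp
  show ?thesis
  proof (rule chernoff)
    show "real m * \<beta> > 0" using m b by simp
    fix \<theta>
    have "(\<integral>\<^sup>+\<omega>. ennreal (exp (\<theta> * (\<Sum>i<m. Y i \<omega>))) \<partial>M) = (\<integral>\<^sup>+x. ennreal (normal_density 0 (sqrt (real m * \<beta>)) x) * ennreal (exp (\<theta> * x)) \<partial>lborel)"
      by (rule distributed_nn_integral[OF DS[unfolded s, simplified], symmetric]) simp
    also have "\<dots> = ennreal (exp (\<theta>^2 * (sqrt (real m * \<beta>))^2/2))"
      using gauss_mgf[of "sqrt (real m * \<beta>)" \<theta>] m b by (simp add: mult.commute)
    also have "\<dots> = ennreal (exp (\<theta>^2 * (real m * \<beta>)/2))" using m b by simp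
    finally show "(\<integral>\<^sup>+\<omega>. ennreal (exp (\<theta> * (\<Sum>i<m. Y i \<omega>))) \<partial>M) \<le> ennreal (exp (\<theta>^2 * (real m * \<beta>)/2))" by simp
  qed (use a in auto)
qed

end


lemma arrival_mono:
  assumes pos: "\<forall>i. E i \<omega> > (0::real)" and ij: "i \<le> j"
  shows "arrival_time E i \<omega> \<le> arrival_time E j \<omega>"
proof -
  have "arrival_time E k \<omega> \<le> arrival_time E (Suc k) \<omega>" for k
    using pos[rule_format, of "Suc k"] by (simp add: arrival_time_def)
  then show ?thesis using ij by (rule lift_Suc_mono_le)
qed

lemma jump_as_partial_sum:
  assumes pos: "\<forall>i. E i \<omega> > (0::real)" and Tn: "\<not> arrival_time E n \<omega> \<le> t"
  shows "\<exists>m\<le>n. jump_part E Y t \<omega> = (\<Sum>i<m. Y i \<omega>)"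
proof -
  define m where "m = (LEAST i. arrival_time E i \<omega> > t)"
  have mn: "m \<le> n" unfolding m_def using Tn by (intro Least_le) simp
  have Tm: "arrival_time E m \<omega> > t" unfolding m_def using Tn LeastI[of "\<lambda>i. t < arrival_time E i \<omega>" n] by simp
  have "{i. arrival_time E i \<omega> \<le> t} = {..<m}"
  proof (intro set_eqI iffI)
    fix i assume "i \<in> {i. arrival_time E i \<omega> \<le> t}"
    then have i: "arrival_time E i \<omega> \<le> t" by simp
    show "i \<in> {..<m}"
    proof (rule ccontr)
      assume "i \<notin> {..<m}"
      then have "m \<le> i" by simp
      then have "arrival_time E m \<omega> \<le> arrival_time E i \<omega>" using arrival_mono[of E \<omega> m i] pos by blast
      then show False using i Tm by linarith
    qed
  next
    fix i assume "i \<in> {..<m}"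
    then have "i < m" by simp
    then have "\<not> arrival_time E i \<omega> > t" unfolding m_def by (rule not_less_Least)
    then show "i \<in> {i. arrival_time E i \<omega> \<le> t}" by simp
  qed
  then show ?thesis using mn unfolding jump_part_def by (intro exI[of _ m]) simp
qed

context prob_space begin

lemma jump_tail_split:
  fixes Y E :: "nat \<Rightarrow> 'a \<Rightarrow> real"
  assumes mY: "\<And>i. Y i \<in> borel_measurable M" and mE: "\<And>i. E i \<in> borel_measurable M"
    and pos: "AE \<omega> in M. \<forall>i. E i \<omega> > 0" and a: "a \<ge> 0"
  shows "prob {\<omega>\<in>space M. \<bar>jump_part E Y t \<omega>\<bar> > a} \<le>
     prob {\<omega>\<in>space M. arrival_time E n \<omega> \<le> t} + (\<Sum>m\<in>{1..n}. prob {\<omega>\<in>space M. \<bar>\<Sum>i<m. Y i \<omega>\<bar> > a})"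
proof -
  note [measurable] = mY mE
  let ?U = "{\<omega>\<in>space M. arrival_time E n \<omega> \<le> t} \<union> (\<Union>m\<in>{1..n}. {\<omega>\<in>space M. \<bar>\<Sum>i<m. Y i \<omega>\<bar> > a})"
  have U: "?U \<in> sets M" by measurable
  have "prob {\<omega>\<in>space M. \<bar>jump_part E Y t \<omega>\<bar> > a} \<le> prob ?U"
  proof (rule prob_mono_AE[OF _ U])
    show "AE x in M. x \<in> {\<omega>\<in>space M. \<bar>jump_part E Y t \<omega>\<bar> > a} \<longrightarrow> x \<in> ?U"
      using pos
    proof eventually_elim
      case (elim \<omega>)
      show ?case
      proof (intro impI)
        assume J: "\<omega> \<in> {\<omega>\<in>space M. \<bar>jump_part E Y t \<omega>\<bar> > a}"
        show "\<omega> \<in> ?U"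
        proof (cases "arrival_time E n \<omega> \<le> t")
          case False
          from jump_as_partial_sum[OF elim False] obtain m where m: "m \<le> n" "jump_part E Y t \<omega> = (\<Sum>i<m. Y i \<omega>)"
            by blast
          have "m \<noteq> 0" using J m a by (cases m) auto
          then have m1: "m \<in> {1..n}" using m by simp
          have "\<omega> \<in> {\<omega>\<in>space M. \<bar>\<Sum>i<m. Y i \<omega>\<bar> > a}" using J m by simp
          then show ?thesis using m1 by (intro UnI2 UN_I[of m]) 
        next
          case True
          then show ?thesis using J by (intro UnI1) simp
        qed
      qed
    qed
  qed
  also have "\<dots> \<le> prob {\<omega>\<in>space M. arrival_time E n \<omega> \<le> t} + prob (\<Union>m\<in>{1..n}. {\<omega>\<in>space M. \<bar>\<Sum>i<m. Y i \<omega>\<bar> > a})"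
    by (intro measure_Un_le) measurable
  also have "prob (\<Union>m\<in>{1..n}. {\<omega>\<in>space M. \<bar>\<Sum>i<m. Y i \<omega>\<bar> > a}) \<le> (\<Sum>m\<in>{1..n}. prob {\<omega>\<in>space M. \<bar>\<Sum>i<m. Y i \<omega>\<bar> > a})"
    by (intro measure_UNION_le) auto
  finally show ?thesis by simp
qed

lemma jump_tail:
  fixes Y E :: "nat \<Rightarrow> 'a \<Rightarrow> real" and \<beta> l a t \<theta> :: real
  assumes IY: "indep_vars (\<lambda>_. borel) Y UNIV" and DY: "\<And>i. distributed M lborel (Y i) (normal_density 0 (sqrt \<beta>))"
    and IE: "indep_vars (\<lambda>_. borel) E UNIV" and DE: "\<And>i. distributed M lborel (E i) (exponential_density l)"
    and l: "l > 0" and b: "\<beta> > 0" and a: "a \<ge> 0" and th: "\<theta> \<ge> 0"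
  shows "prob {\<omega>\<in>space M. \<bar>jump_part E Y t \<omega>\<bar> > a} \<le>
     exp (\<theta> * t) * (l/(l+\<theta>))^(Suc n) + real n * (2 * exp (- (a^2) / (2 * (real n * \<beta>))))"
proof -
  have mY: "Y i \<in> borel_measurable M" for i using DY[of i] by (simp add: distributed_def)
  have mE: "E i \<in> borel_measurable M" for i using DE[of i] by (simp add: distributed_def)
  have "prob {\<omega>\<in>space M. \<bar>jump_part E Y t \<omega>\<bar> > a} \<le>
     prob {\<omega>\<in>space M. arrival_time E n \<omega> \<le> t} + (\<Sum>m\<in>{1..n}. prob {\<omega>\<in>space M. \<bar>\<Sum>i<m. Y i \<omega>\<bar> > a})"
    by (rule jump_tail_split[OF mY mE expo_pos_AE[OF DE l] a])
  also have "\<dots> \<le> exp (\<theta> * t) * (l/(l+\<theta>))^(Suc n) + (\<Sum>m\<in>{1..n}. 2 * exp (- (a^2) / (2 * (real n * \<beta>))))"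
  proof (intro add_mono sum_mono)
    show "prob {\<omega>\<in>space M. arrival_time E n \<omega> \<le> t} \<le> exp (\<theta> * t) * (l/(l+\<theta>))^(Suc n)"
      by (rule arrival_laplace[OF IE DE l th])
    fix m assume m: "m \<in> {1..n}"
    have "prob {\<omega>\<in>space M. \<bar>\<Sum>i<m. Y i \<omega>\<bar> > a} \<le> 2 * exp (- (a^2) / (2 * (real m * \<beta>)))"
      by (rule gauss_sum_tail[OF IY b DY]) (use m a in auto)
    also have "\<dots> \<le> 2 * exp (- (a^2) / (2 * (real n * \<beta>)))"
    proof -
      have "real m * \<beta> \<le> real n * \<beta>" using m b by (intro mult_right_mono) auto
      then have "a^2 / (2 * (real n * \<beta>)) \<le> a^2 / (2 * (real m * \<beta>))"
        using m b by (intro divide_left_mono) auto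
      then show ?thesis by simp
    qed
    finally show "prob {\<omega>\<in>space M. \<bar>\<Sum>i<m. Y i \<omega>\<bar> > a} \<le> 2 * exp (- (a^2) / (2 * (real n * \<beta>)))" .
  qed
  finally show ?thesis by simp
qed

end

lemma finite_time_enum:
  fixes J :: "real set"
  assumes J: "finite J" "J \<subseteq> {0..s}" and s: "0 \<le> s" "s < u"
  shows "\<exists>N ts. N \<ge> 1 \<and> ts 0 = 0 \<and> ts (N-1) = s \<and> ts N = u \<and> (\<forall>i<N. ts i < ts (Suc i)) \<and> (\<forall>r\<in>J. \<exists>j<N. ts j = r)"
proof -
  define L where "L = sorted_list_of_set ({0,s} \<union> J)"
  define N where "N = length L"
  define ts where "ts i = (if i < N then L ! i else u + real (i - N))" for i
  have fin: "finite ({0,s} \<union> J)" using J by simp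
  have setL: "set L = {0,s} \<union> J" unfolding L_def by (rule set_sorted_list_of_set[OF fin])
  have strict: "sorted_wrt (<) L" unfolding L_def by (rule strict_sorted_list_of_set)
  then have sorted: "sorted L" by (simp add: strict_sorted_iff)
  have range: "\<And>x. x \<in> set L \<Longrightarrow> 0 \<le> x \<and> x \<le> s" using setL J s by auto
  have N1: "N \<ge> 1" unfolding N_def using setL by (cases L) auto
  obtain k0 where k0: "k0 < N" "L ! k0 = 0" using setL unfolding N_def by (metis UnI1 in_set_conv_nth insertI1)
  obtain ks where ks: "ks < N" "L ! ks = s" using setL unfolding N_def by (metis UnI1 in_set_conv_nth insertI1 insert_commute)
  have "L ! 0 \<le> L ! k0" using sorted k0 unfolding N_def by (intro sorted_nth_mono) auto
  moreover have "0 \<le> L ! 0"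
  proof -
    have "L ! 0 \<in> set L" using N1 unfolding N_def by (intro nth_mem) auto
    then show ?thesis using range by blast
  qed
  ultimately have t0: "ts 0 = 0" using k0 N1 unfolding ts_def by auto
  have "L ! ks \<le> L ! (N-1)" using sorted ks unfolding N_def by (intro sorted_nth_mono) auto
  moreover have "L ! (N-1) \<le> s"
  proof -
    have "L ! (N-1) \<in> set L" using N1 unfolding N_def by (intro nth_mem) auto
    then show ?thesis using range by blast
  qed
  ultimately have tN1: "ts (N-1) = s" using ks N1 unfolding ts_def by auto
  have tN: "ts N = u" unfolding ts_def by simp
  have inc: "\<forall>i<N. ts i < ts (Suc i)"
  proof (intro allI impI)
    fix i assume i: "i < N"
    show "ts i < ts (Suc i)"
    proof (cases "Suc i < N")
      case True
      then show ?thesis using sorted_wrt_nth_less[OF strict, of i "Suc i"] i unfolding ts_def N_def by auto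
    next
      case False
      then have "i = N - 1" using i by simp
      then show ?thesis using tN1 tN s False i by (metis Suc_diff_1 le_less_trans less_le_not_le nat_neq_iff order_refl zero_less_one N1 less_le_trans)
    qed
  qed
  have cover: "\<forall>r\<in>J. \<exists>j<N. ts j = r"
  proof
    fix r assume "r \<in> J"
    then have "r \<in> set L" using setL by auto
    then obtain j where "j < N" "L ! j = r" unfolding N_def by (metis in_set_conv_nth)
    then show "\<exists>j<N. ts j = r" unfolding ts_def by auto
  qed
  show ?thesis using N1 t0 tN1 tN inc cover by blast
qed

lemma Int_stable_pre: "Int_stable {f -` A \<inter> \<Omega> | A. A \<in> sets N}"
proof (safe intro!: Int_stableI)
  fix A B assume "A \<in> sets N" "B \<in> sets N"
  then show "\<exists>C. (f -` A \<inter> \<Omega>) \<inter> (f -` B \<inter> \<Omega>) = (f -` C \<inter> \<Omega>) \<and> C \<in> sets N"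
    by (intro exI[of _ "A \<inter> B"]) auto
qed

lemma sigma_sets_Int_closed:
  assumes "G \<subseteq> Pow \<Omega>" "a \<in> sigma_sets \<Omega> G" "b \<in> sigma_sets \<Omega> G"
  shows "a \<inter> b \<in> sigma_sets \<Omega> G"
proof -
  interpret sigma_algebra \<Omega> "sigma_sets \<Omega> G" using assms(1) by (rule sigma_algebra_sigma_sets)
  show ?thesis using assms(2,3) by (rule Int)
qed

lemma Int_stable_sigma_sets: "G \<subseteq> Pow \<Omega> \<Longrightarrow> Int_stable (sigma_sets \<Omega> G)"
  by (auto intro!: Int_stableI sigma_sets_Int_closed)

lemma measurable_sigma_gen:
  assumes G: "G \<subseteq> Pow \<Omega>" and pre: "\<And>A. A \<in> sets borel \<Longrightarrow> f -` A \<inter> \<Omega> \<in> sigma_sets \<Omega> G"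
  shows "f \<in> borel_measurable (sigma \<Omega> G)"
proof (rule measurableI)
  fix A :: "'b set" assume "A \<in> sets borel"
  then show "f -` A \<inter> space (sigma \<Omega> G) \<in> sets (sigma \<Omega> G)"
    using pre G by (simp add: sets_measure_of space_measure_of_conv)
qed simp

lemma pre_subset_Pow: "{f -` A \<inter> \<Omega> | A. A \<in> sets N} \<subseteq> Pow \<Omega>" by auto

context prob_space begin

lemma BM_past_indep:
  assumes BM: "std_brownian_motion M B" and J: "finite J" "J \<subseteq> {0..s}" and s: "0 \<le> s" "s < u"
    and A: "A \<in> sigma_sets (space M) (\<Union>r\<in>J. {B r -` H \<inter> space M | H. H \<in> sets borel})"
    and G: "G \<in> {(\<lambda>\<omega>. B u \<omega> - B s \<omega>) -` H \<inter> space M | H. H \<in> sets borel}"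
  shows "prob (A \<inter> G) = prob A * prob G"
proof -
  obtain N ts where N1: "N \<ge> 1" and t0: "ts 0 = (0::real)" and tN1: "ts (N-1) = s" and tN: "ts N = u"
    and inc: "\<forall>i<N. ts i < ts (Suc i)" and cover: "\<forall>r\<in>J. \<exists>j<N. ts j = r"
    using finite_time_enum[OF J s] by blast
  define \<Delta> where "\<Delta> i \<omega> = B (ts (Suc i)) \<omega> - B (ts i) \<omega>" for i \<omega>
  have mB: "B r \<in> borel_measurable M" for r using BM unfolding std_brownian_motion_def by blast
  have B0: "\<And>\<omega>. \<omega> \<in> space M \<Longrightarrow> B 0 \<omega> = 0" using BM unfolding std_brownian_motion_def by blast
  have ind: "indep_vars (\<lambda>_. borel) \<Delta> {..<N}"
    using BM t0 inc unfolding std_brownian_motion_def \<Delta>_def[abs_def] by auto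
  let ?pre = "\<lambda>i. {\<Delta> i -` H \<inter> space M | H. H \<in> sets borel}"
  have ind1: "indep_sets (\<lambda>i. sigma_sets (space M) (?pre i)) {..<N}"
    using ind unfolding indep_vars_def by blast
  define I' where "I' j = (if j = (0::nat) then {..<N-1} else {N-1})" for j
  have UI: "(\<Union>j\<in>{0,1}. I' j) = {..<N}" using N1 unfolding I'_def by auto
  have ind2: "indep_sets (\<lambda>j. sigma_sets (space M) (\<Union>i\<in>I' j. sigma_sets (space M) (?pre i))) {0,1}"
  proof (rule indep_sets_collect_sigma)
    show "indep_sets (\<lambda>i. sigma_sets (space M) (?pre i)) (\<Union>j\<in>{0,1}. I' j)" using ind1 UI by simp
    show "Int_stable (sigma_sets (space M) (?pre i))" for i
      by (rule Int_stable_sigma_sets) auto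
    show "disjoint_family_on I' {0,1}" unfolding disjoint_family_on_def I'_def by auto
  qed
  let ?G0 = "\<Union>i\<in>I' 0. sigma_sets (space M) (?pre i)"
  let ?G1 = "\<Union>i\<in>I' 1. sigma_sets (space M) (?pre i)"
  have G0P: "?G0 \<subseteq> Pow (space M)"
    using sigma_sets_into_sp[OF pre_subset_Pow] by blast
  have AP0: "A \<in> sigma_sets (space M) ?G0"
  proof -
    have "(\<Union>r\<in>J. {B r -` H \<inter> space M | H. H \<in> sets borel}) \<subseteq> sigma_sets (space M) ?G0"
    proof (safe)
      fix r H assume r: "r \<in> J" and H: "H \<in> sets (borel :: real measure)"
      obtain j where j: "j < N" "ts j = r" using cover r by blast
      have mD: "\<Delta> i \<in> borel_measurable (sigma (space M) ?G0)" if "i < j" for i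
      proof (rule measurable_sigma_gen[OF G0P])
        fix A :: "real set" assume "A \<in> sets borel"
        then have "\<Delta> i -` A \<inter> space M \<in> sigma_sets (space M) (?pre i)" by blast
        moreover have "i \<in> I' 0" using that j unfolding I'_def by simp
        ultimately show "\<Delta> i -` A \<inter> space M \<in> sigma_sets (space M) ?G0" by blast
      qed
      have "(\<lambda>\<omega>. \<Sum>i<j. \<Delta> i \<omega>) \<in> borel_measurable (sigma (space M) ?G0)"
        using mD by (intro borel_measurable_sum) auto
      moreover have "\<And>\<omega>. \<omega> \<in> space (sigma (space M) ?G0) \<Longrightarrow> (\<Sum>i<j. \<Delta> i \<omega>) = B r \<omega>"
      proof -
        fix \<omega> assume "\<omega> \<in> space (sigma (space M) ?G0)"
        then have \<omega>: "\<omega> \<in> space M" using G0P by (simp add: space_measure_of_conv)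
        have "(\<Sum>i<j. \<Delta> i \<omega>) = B (ts j) \<omega> - B (ts 0) \<omega>"
          unfolding \<Delta>_def by (rule sum_lessThan_telescope)
        then show "(\<Sum>i<j. \<Delta> i \<omega>) = B r \<omega>" using j t0 B0[OF \<omega>] by simp
      qed
      ultimately have "B r \<in> borel_measurable (sigma (space M) ?G0)"
        by (rule measurable_cong[THEN iffD1, rotated])
      then have "B r -` H \<inter> space (sigma (space M) ?G0) \<in> sets (sigma (space M) ?G0)"
        using H by (rule measurable_sets)
      then show "B r -` H \<inter> space M \<in> sigma_sets (space M) ?G0"
        using G0P by (simp add: space_measure_of_conv sets_measure_of)
    qed
    then show ?thesis using A sigma_sets_mono by blast
  qed
  have GP1: "G \<in> sigma_sets (space M) ?G1"
  proof -
    have D: "\<Delta> (N-1) = (\<lambda>\<omega>. B u \<omega> - B s \<omega>)" using N1 tN tN1 unfolding \<Delta>_def by (auto simp: fun_eq_iff)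
    have "G \<in> ?pre (N-1)" using G D by simp
    then have "G \<in> ?G1" unfolding I'_def by auto
    then show ?thesis by blast
  qed
  have "prob (\<Inter>j\<in>{0::nat,1}. (if j = 0 then A else G)) = (\<Prod>j\<in>{0::nat,1}. prob (if j = 0 then A else G))"
    by (rule indep_setsD[OF ind2]) (use AP0 GP1 in auto)
  then show ?thesis by (simp add: Int_commute)
qed

end

context prob_space begin

lemma gen_sigma_events:
  assumes "\<And>i. i \<in> I \<Longrightarrow> Z i \<in> borel_measurable M"
  shows "gen_sigma M Z I \<subseteq> sets M"
  unfolding gen_sigma_def using assms by (intro sets.sigma_sets_subset) auto

lemma noise_indep:
  assumes BM: "std_brownian_motion M B"
    and ind3: "indep_sets (\<lambda>k::nat. if k = 0 then gen_sigma M B {0..}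
                 else if k = 1 then gen_sigma M Y UNIV else gen_sigma M E UNIV) {0, 1, 2}"
    and mY: "\<And>i. Y i \<in> borel_measurable M" and mE: "\<And>i. E i \<in> borel_measurable M"
    and s: "0 \<le> s" "s < u"
  shows "indep_set (sets (noise_filtration M B Y E s)) {(\<lambda>\<omega>. B u \<omega> - B s \<omega>) -` H \<inter> space M | H. H \<in> sets borel}"
proof -
  have mB: "B r \<in> borel_measurable M" for r using BM unfolding std_brownian_motion_def by blast
  let ?Gs = "{(\<lambda>\<omega>. B u \<omega> - B s \<omega>) -` H \<inter> space M | H. H \<in> sets borel}"
  let ?GBgen = "\<Union>r\<in>{0..}. {B r -` H \<inter> space M | H. H \<in> sets (borel::real measure)}"
  let ?GB = "gen_sigma M B {0..}"
  let ?GY = "gen_sigma M Y UNIV" and ?GE = "gen_sigma M E UNIV"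
  let ?QYE = "sigma_sets (space M) (?GY \<union> ?GE)"
  have GBgenP: "?GBgen \<subseteq> Pow (space M)" by auto
  have GYEP: "?GY \<union> ?GE \<subseteq> Pow (space M)"
    unfolding gen_sigma_def by (auto dest: sigma_sets_into_sp[rotated])
  have GB_eq: "?GB = sigma_sets (space M) ?GBgen" unfolding gen_sigma_def by simp
  have GB_ev: "?GB \<subseteq> sets M" using mB by (intro gen_sigma_events)
  have QYE_ev: "?QYE \<subseteq> sets M"
    using gen_sigma_events[of UNIV Y] gen_sigma_events[of UNIV E] mY mE
    by (intro sets.sigma_sets_subset) auto
  define I'' where "I'' j = (if j = (0::nat) then {0::nat} else {1,2})" for j
  have indYE: "indep_sets (\<lambda>j. sigma_sets (space M) (\<Union>i\<in>I'' j. (if i = 0 then ?GB else if i = 1 then ?GY else ?GE))) {0,1}"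
  proof (rule indep_sets_collect_sigma)
    have "(\<Union>j\<in>{0,1}. I'' j) = {0,1,2}" unfolding I''_def by auto
    then show "indep_sets (\<lambda>i. if i = 0 then ?GB else if i = 1 then ?GY else ?GE) (\<Union>j\<in>{0,1}. I'' j)"
      using ind3 by simp
    show "Int_stable (if i = 0 then ?GB else if i = 1 then ?GY else ?GE)" for i
      unfolding gen_sigma_def by (auto intro!: Int_stable_sigma_sets)
    show "disjoint_family_on I'' {0,1}" unfolding disjoint_family_on_def I''_def by auto
  qed
  have indBQ: "prob (A \<inter> C) = prob A * prob C" if A: "A \<in> ?GB" and C: "C \<in> ?QYE" for A C
  proof -
    have e0: "(\<Union>i\<in>I'' 0. (if i = 0 then ?GB else if i = 1 then ?GY else ?GE)) = ?GB" unfolding I''_def by simp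
    have e1: "(\<Union>i\<in>I'' 1. (if i = 0 then ?GB else if i = 1 then ?GY else ?GE)) = ?GY \<union> ?GE" unfolding I''_def by auto
    have "prob (\<Inter>j\<in>{0::nat,1}. (if j = 0 then A else C)) = (\<Prod>j\<in>{0::nat,1}. prob (if j = 0 then A else C))"
      by (rule indep_setsD[OF indYE]) (use A C e0 e1 in auto)
    then show ?thesis by (simp add: Int_commute)
  qed
  define PB where "PB J = sigma_sets (space M) (\<Union>r\<in>J. {B r -` H \<inter> space M | H. H \<in> sets (borel::real measure)})" for J
  have PBP: "(\<Union>r\<in>J. {B r -` H \<inter> space M | H. H \<in> sets (borel::real measure)}) \<subseteq> Pow (space M)" for J by auto
  have PB_GB: "PB J \<subseteq> ?GB" if "J \<subseteq> {0..}" for J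
    unfolding PB_def GB_eq using that by (intro sigma_sets_mono') auto
  have PB_mono: "PB J1 \<subseteq> PB J2" if "J1 \<subseteq> J2" for J1 J2
    unfolding PB_def using that by (intro sigma_sets_mono') auto
  define PPs where "PPs = {A. \<exists>J. finite J \<and> J \<subseteq> {0..s} \<and> A \<in> PB J}"
  define PiS where "PiS = {A \<inter> C | A C. A \<in> PPs \<and> C \<in> ?QYE}"
  have G_GB: "G \<in> ?GB" if Gin: "G \<in> ?Gs" for G
  proof -
    have "B r \<in> borel_measurable (sigma (space M) ?GBgen)" if "r \<ge> 0" for r
    proof (rule measurable_sigma_gen[OF GBgenP])
      fix A :: "real set" assume "A \<in> sets borel"
      then have "B r -` A \<inter> space M \<in> ?GBgen" using that by (intro UN_I[of r]) auto
      then show "B r -` A \<inter> space M \<in> sigma_sets (space M) ?GBgen" by (rule sigma_sets.Basic)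
    qed
    then have "B u \<in> borel_measurable (sigma (space M) ?GBgen)" "B s \<in> borel_measurable (sigma (space M) ?GBgen)"
      using s by auto
    then have dm: "(\<lambda>\<omega>. B u \<omega> - B s \<omega>) \<in> borel_measurable (sigma (space M) ?GBgen)" by measurable
    obtain H where H: "H \<in> sets borel" and GH: "G = (\<lambda>\<omega>. B u \<omega> - B s \<omega>) -` H \<inter> space M" using Gin by blast
    have "(\<lambda>\<omega>. B u \<omega> - B s \<omega>) -` H \<inter> space (sigma (space M) ?GBgen) \<in> sets (sigma (space M) ?GBgen)"
      by (rule measurable_sets[OF dm H])
    then have "G \<in> sets (sigma (space M) ?GBgen)" using GBgenP unfolding GH by (simp add: space_measure_of_conv)
    then show ?thesis using GBgenP unfolding GB_eq by (simp add: sets_measure_of)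
  qed
  have indPG: "indep_set PiS ?Gs"
  proof (rule indep_setI)
    show "PiS \<subseteq> events"
    proof
      fix x assume "x \<in> PiS"
      then obtain A C J where "x = A \<inter> C" "C \<in> ?QYE" "J \<subseteq> {0..s}" "A \<in> PB J" unfolding PiS_def PPs_def by blast
      moreover have "J \<subseteq> {0..}" using \<open>J \<subseteq> {0..s}\<close> by auto
      ultimately show "x \<in> events" using PB_GB GB_ev QYE_ev by blast
    qed
    have dmM: "(\<lambda>\<omega>. B u \<omega> - B s \<omega>) \<in> borel_measurable M" using mB by measurable
    show "?Gs \<subseteq> events" using dmM by (auto intro: measurable_sets)
    fix a b assume a: "a \<in> PiS" and b: "b \<in> ?Gs"
    then obtain A C J where aAC: "a = A \<inter> C" and C: "C \<in> ?QYE" and J: "finite J" "J \<subseteq> {0..s}" and A: "A \<in> PB J"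
      unfolding PiS_def PPs_def by blast
    have "J \<subseteq> {0..}" using J by auto
    then have AGB: "A \<in> ?GB" using PB_GB A by blast
    have bGB: "b \<in> ?GB" using G_GB b by blast
    have ABGB: "A \<inter> b \<in> ?GB" unfolding GB_eq using AGB bGB GBgenP unfolding GB_eq by (intro sigma_sets_Int_closed) auto
    have past: "prob (A \<inter> b) = prob A * prob b"
      by (rule BM_past_indep[OF BM J s A[unfolded PB_def] b])
    have "prob (a \<inter> b) = prob ((A \<inter> b) \<inter> C)" unfolding aAC by (simp add: Int_ac)
    also have "\<dots> = prob (A \<inter> b) * prob C" by (rule indBQ[OF ABGB C])
    also have "\<dots> = prob A * prob C * prob b" using past by simp
    also have "prob A * prob C = prob a" unfolding aAC by (rule indBQ[OF AGB C, symmetric])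
    finally show "prob (a \<inter> b) = prob a * prob b" .
  qed
  have stP: "Int_stable PiS"
  proof (rule Int_stableI)
    fix a b assume a: "a \<in> PiS" and b: "b \<in> PiS"
    obtain A1 C1 J1 where 1: "a = A1 \<inter> C1" "C1 \<in> ?QYE" "finite J1" "J1 \<subseteq> {0..s}" "A1 \<in> PB J1"
      using a unfolding PiS_def PPs_def by blast
    obtain A2 C2 J2 where 2: "b = A2 \<inter> C2" "C2 \<in> ?QYE" "finite J2" "J2 \<subseteq> {0..s}" "A2 \<in> PB J2"
      using b unfolding PiS_def PPs_def by blast
    have "A1 \<in> PB (J1 \<union> J2)" "A2 \<in> PB (J1 \<union> J2)" using 1 2 PB_mono[of J1 "J1 \<union> J2"] PB_mono[of J2 "J1 \<union> J2"] by auto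
    then have "A1 \<inter> A2 \<in> PB (J1 \<union> J2)" unfolding PB_def by (intro sigma_sets_Int_closed[OF PBP])
    then have AA: "A1 \<inter> A2 \<in> PPs" unfolding PPs_def using 1 2 by (intro CollectI exI[of _ "J1 \<union> J2"]) auto
    have CC: "C1 \<inter> C2 \<in> ?QYE" using 1 2 GYEP by (intro sigma_sets_Int_closed)
    have ab: "a \<inter> b = (A1 \<inter> A2) \<inter> (C1 \<inter> C2)" using 1 2 by auto
    show "a \<inter> b \<in> PiS" unfolding PiS_def ab by (intro CollectI exI[of _ "A1 \<inter> A2"] exI[of _ "C1 \<inter> C2"]) (use AA CC in simp)
  qed
  have indS: "indep_set (sigma_sets (space M) PiS) (sigma_sets (space M) ?Gs)"
    by (rule indep_set_sigma_sets[OF indPG stP Int_stable_pre])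
  let ?Fn = "\<lambda>(k::bool, r). if k then B r else jump_part E Y r"
  let ?gen = "\<Union>i\<in>UNIV \<times> {0..s}. {?Fn i -` A \<inter> space M | A. A \<in> sets (borel::real measure)}"
  have genP: "?gen \<subseteq> Pow (space M)" by auto
  have jmeas: "jump_part E Y r \<in> borel_measurable (sigma (space M) (?GY \<union> ?GE))" for r
  proof (rule jump_part_measurable)
    fix i
    show "Y i \<in> borel_measurable (sigma (space M) (?GY \<union> ?GE))"
      by (rule measurable_sigma_gen[OF GYEP]) (auto simp: gen_sigma_def)
    show "E i \<in> borel_measurable (sigma (space M) (?GY \<union> ?GE))"
      by (rule measurable_sigma_gen[OF GYEP]) (auto simp: gen_sigma_def)
  qed
  have gen_sub: "?gen \<subseteq> sigma_sets (space M) PiS"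
  proof
    fix W assume "W \<in> ?gen"
    then obtain kr A where kr0: "kr \<in> UNIV \<times> {0..s}" and A: "A \<in> sets (borel::real measure)" and W0: "W = ?Fn kr -` A \<inter> space M"
      by auto
    obtain k r where krr: "kr = (k, r)" by (cases kr)
    have kr: "r \<in> {0..s}" using kr0 krr by simp
    have W: "W = ?Fn (k, r) -` A \<inter> space M" using W0 krr by simp
    show "W \<in> sigma_sets (space M) PiS"
    proof (cases k)
      case True
      then have W': "W = B r -` A \<inter> space M" using W by simp
      have "W \<in> PB {r}" unfolding PB_def W' using A by blast
      then have "W \<in> PPs" unfolding PPs_def using kr by (intro CollectI exI[of _ "{r}"]) auto
      moreover have "space M \<in> ?QYE" by (rule sigma_sets_top)
      moreover have "W = W \<inter> space M" using W' by auto
      ultimately have "W \<in> PiS" unfolding PiS_def by (intro CollectI exI[of _ W] exI[of _ "space M"]) simp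
      then show ?thesis by blast
    next
      case False
      then have W': "W = jump_part E Y r -` A \<inter> space M" using W by simp
      have "W \<in> ?QYE"
        using measurable_sets[OF jmeas A] GYEP unfolding W' by (simp add: sets_measure_of space_measure_of_conv)
      moreover have "space M \<in> PPs" unfolding PPs_def PB_def by (intro CollectI exI[of _ "{}"]) (simp add: sigma_sets_top)
      moreover have "W = space M \<inter> W" using W' by auto
      ultimately have "W \<in> PiS" unfolding PiS_def by (intro CollectI exI[of _ "space M"] exI[of _ W]) simp
      then show ?thesis by blast
    qed
  qed
  have filt_sub: "sets (noise_filtration M B Y E s) \<subseteq> sigma_sets (space M) PiS"
  proof -
    have "gen_sigma M ?Fn (UNIV \<times> {0..s}) = sigma_sets (space M) ?gen" unfolding gen_sigma_def ..
    moreover have "sigma_sets (space M) ?gen \<subseteq> Pow (space M)" using sigma_sets_into_sp[OF genP] by blast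
    ultimately have "sets (noise_filtration M B Y E s) = sigma_sets (space M) (sigma_sets (space M) ?gen)"
      unfolding noise_filtration_def by (simp add: sets_measure_of)
    also have "\<dots> = sigma_sets (space M) ?gen" by (rule sigma_sets_sigma_sets_eq[OF genP])
    also have "\<dots> \<subseteq> sigma_sets (space M) PiS" by (rule sigma_sets_mono[OF gen_sub])
    finally show ?thesis .
  qed
  show ?thesis
    unfolding indep_set_def
    by (rule indep_sets_mono_sets[OF indS[unfolded indep_set_def]]) (use filt_sub in \<open>auto split: bool.split\<close>)
qed

end

context prob_space begin

lemma mgf_step:
  fixes F :: "'a measure" and W V D :: "'a \<Rightarrow> real"
  assumes sub: "subalgebra M F"
    and ind: "indep_set (sets F) {D -` H \<inter> space M | H. H \<in> sets borel}"
    and DD: "distributed M lborel D (normal_density 0 (sqrt \<Delta>))" and \<Delta>: "\<Delta> > 0"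
    and W: "W \<in> borel_measurable F" and V: "V \<in> borel_measurable F" and Vb: "\<And>\<omega>. \<omega> \<in> space M \<Longrightarrow> \<bar>V \<omega>\<bar> \<le> S"
  shows "(\<integral>\<^sup>+\<omega>. ennreal (W \<omega>) * ennreal (exp (\<theta> * V \<omega> * D \<omega>)) \<partial>M)
     \<le> ennreal (exp (\<theta>^2 * S^2 * \<Delta> / 2)) * (\<integral>\<^sup>+\<omega>. ennreal (W \<omega>) \<partial>M)"
proof -
  define P where "P \<omega> = (W \<omega>, V \<omega>)" for \<omega>
  have PF: "P \<in> measurable F (borel \<Otimes>\<^sub>M borel)" unfolding P_def using W V by measurable
  have PM: "P \<in> measurable M (borel \<Otimes>\<^sub>M borel)" by (rule measurable_from_subalg[OF sub PF])
  have DM: "D \<in> borel_measurable M" using DD by (simp add: distributed_def)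
  have WM: "W \<in> borel_measurable M" by (rule measurable_from_subalg[OF sub W])
  have spF: "space F = space M" and sF: "sets F \<subseteq> sets M" using sub by (auto simp: subalgebra_def)
  let ?DP = "distr M (borel \<Otimes>\<^sub>M borel) P"
  let ?DD = "distr M borel D"
  interpret DDp: prob_space ?DD by (rule prob_space_distr) (use DM in simp)
  interpret DPp: prob_space ?DP by (rule prob_space_distr[OF PM])
  interpret PP: pair_prob_space ?DP ?DD by (rule pair_prob_space.intro; unfold_locales)
  have PDM: "(\<lambda>x. (P x, D x)) \<in> measurable M ((borel \<Otimes>\<^sub>M borel) \<Otimes>\<^sub>M borel)"
    using PM DM by (rule measurable_Pair)
  have jd: "?DP \<Otimes>\<^sub>M ?DD = distr M ((borel \<Otimes>\<^sub>M borel) \<Otimes>\<^sub>M borel) (\<lambda>x. (P x, D x))"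
  proof (rule pair_measure_eqI)
    show "sigma_finite_measure ?DP" ..
    show "sigma_finite_measure ?DD" ..
    show "sets (?DP \<Otimes>\<^sub>M ?DD) = sets (distr M ((borel \<Otimes>\<^sub>M borel) \<Otimes>\<^sub>M borel) (\<lambda>x. (P x, D x)))" by simp
    fix A B assume A: "A \<in> sets ?DP" and B: "B \<in> sets ?DD"
    have A': "A \<in> sets (borel \<Otimes>\<^sub>M borel)" and B': "B \<in> sets (borel :: real measure)" using A B by auto
    have aF: "P -` A \<inter> space M \<in> sets F" using measurable_sets[OF PF A'] spF by simp
    have bG: "D -` B \<inter> space M \<in> {D -` H \<inter> space M | H. H \<in> sets borel}" using B' by blast
    have "emeasure (distr M ((borel \<Otimes>\<^sub>M borel) \<Otimes>\<^sub>M borel) (\<lambda>x. (P x, D x))) (A \<times> B)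
        = emeasure M ((\<lambda>x. (P x, D x)) -` (A \<times> B) \<inter> space M)"
      using A' B' by (intro emeasure_distr[OF PDM]) auto
    also have "(\<lambda>x. (P x, D x)) -` (A \<times> B) \<inter> space M = (P -` A \<inter> space M) \<inter> (D -` B \<inter> space M)" by auto
    also have "emeasure M \<dots> = ennreal (prob (P -` A \<inter> space M) * prob (D -` B \<inter> space M))"
      using indep_setD[OF ind aF bG] by (simp add: emeasure_eq_measure)
    also have "\<dots> = emeasure M (P -` A \<inter> space M) * emeasure M (D -` B \<inter> space M)"
      by (simp add: emeasure_eq_measure ennreal_mult)
    also have "\<dots> = emeasure ?DP A * emeasure ?DD B"
      using A' B' PM DM by (simp add: emeasure_distr)
    finally show "emeasure ?DP A * emeasure ?DD B = emeasure (distr M ((borel \<Otimes>\<^sub>M borel) \<Otimes>\<^sub>M borel) (\<lambda>x. (P x, D x))) (A \<times> B)" by simp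
  qed
  have DDeq: "?DD = density lborel (\<lambda>x. ennreal (normal_density 0 (sqrt \<Delta>) x))"
  proof -
    have "?DD = distr M lborel D" by (rule distr_cong) auto
    then show ?thesis using DD by (simp add: distributed_def)
  qed
  define h where "h z = ennreal (fst (fst z)) * ennreal (exp (\<theta> * snd (fst z) * snd z))" for z :: "(real \<times> real) \<times> real"
  have hm: "h \<in> borel_measurable ((borel \<Otimes>\<^sub>M borel) \<Otimes>\<^sub>M borel)" unfolding h_def by measurable
  have "(\<integral>\<^sup>+\<omega>. ennreal (W \<omega>) * ennreal (exp (\<theta> * V \<omega> * D \<omega>)) \<partial>M) = (\<integral>\<^sup>+\<omega>. h (P \<omega>, D \<omega>) \<partial>M)"
    unfolding h_def P_def by simp
  also have "\<dots> = (\<integral>\<^sup>+z. h z \<partial>distr M ((borel \<Otimes>\<^sub>M borel) \<Otimes>\<^sub>M borel) (\<lambda>x. (P x, D x)))"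
    using PM DM hm by (subst nn_integral_distr) auto
  also have "\<dots> = (\<integral>\<^sup>+z. h z \<partial>(?DP \<Otimes>\<^sub>M ?DD))" unfolding jd ..
  also have "\<dots> = (\<integral>\<^sup>+p. \<integral>\<^sup>+d. h (p, d) \<partial>?DD \<partial>?DP)"
    using hm by (intro DDp.nn_integral_fst[symmetric]) simp
  also have "\<dots> \<le> (\<integral>\<^sup>+p. ennreal (fst p) * ennreal (exp (\<theta>^2 * S^2 * \<Delta> / 2)) \<partial>?DP)"
  proof (rule nn_integral_mono_AE)
    have "AE p in ?DP. \<bar>snd p\<bar> \<le> S"
      using PM Vb by (subst AE_distr_iff) (auto simp: P_def)
    then show "AE p in ?DP. (\<integral>\<^sup>+d. h (p, d) \<partial>?DD) \<le> ennreal (fst p) * ennreal (exp (\<theta>^2 * S^2 * \<Delta> / 2))"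
    proof eventually_elim
      case (elim p)
      have "(\<integral>\<^sup>+d. h (p, d) \<partial>?DD) = (\<integral>\<^sup>+d. ennreal (normal_density 0 (sqrt \<Delta>) d) * h (p, d) \<partial>lborel)"
        unfolding DDeq using hm by (subst nn_integral_density) (auto simp: h_def)
      also have "\<dots> = (\<integral>\<^sup>+d. ennreal (fst p) * (ennreal (exp ((\<theta> * snd p) * d)) * ennreal (normal_density 0 (sqrt \<Delta>) d)) \<partial>lborel)"
        by (intro nn_integral_cong) (simp add: h_def mult_ac)
      also have "\<dots> = ennreal (fst p) * (\<integral>\<^sup>+d. ennreal (exp ((\<theta> * snd p) * d)) * ennreal (normal_density 0 (sqrt \<Delta>) d) \<partial>lborel)"
        by (intro nn_integral_cmult) simp
      also have "\<dots> = ennreal (fst p) * ennreal (exp ((\<theta> * snd p)^2 * (sqrt \<Delta>)^2 / 2))"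
        using \<Delta> by (subst gauss_mgf) auto
      also have "\<dots> \<le> ennreal (fst p) * ennreal (exp (\<theta>^2 * S^2 * \<Delta> / 2))"
      proof (intro mult_left_mono ennreal_leI)
        have "\<bar>snd p\<bar>^2 \<le> S^2" using elim by (intro power_mono) auto
        then have "(snd p)^2 \<le> S^2" by simp
        then have "\<theta>^2 * (snd p)^2 * \<Delta> \<le> \<theta>^2 * S^2 * \<Delta>" using \<Delta> by (intro mult_right_mono mult_left_mono) auto
        then show "exp ((\<theta> * snd p)^2 * (sqrt \<Delta>)^2 / 2) \<le> exp (\<theta>^2 * S^2 * \<Delta> / 2)"
          using \<Delta> by (simp add: power_mult_distrib)
      qed simp
      finally show ?case .
    qed
  qed
  also have "\<dots> = ennreal (exp (\<theta>^2 * S^2 * \<Delta> / 2)) * (\<integral>\<^sup>+p. ennreal (fst p) \<partial>?DP)"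
    by (subst nn_integral_multc) (auto simp: mult.commute)
  also have "(\<integral>\<^sup>+p. ennreal (fst p) \<partial>?DP) = (\<integral>\<^sup>+\<omega>. ennreal (W \<omega>) \<partial>M)"
    using PM by (subst nn_integral_distr) (auto simp: P_def)
  finally show ?thesis .
qed

end

lemma nf_gen_Pow: "(\<Union>i\<in>I. {Z i -` A \<inter> space M | A. A \<in> sets (borel::real measure)}) \<subseteq> Pow (space M)" by auto

lemma gen_sigma_Pow: "gen_sigma M Z I \<subseteq> Pow (space M)"
  unfolding gen_sigma_def using sigma_sets_into_sp[OF nf_gen_Pow] by blast

lemma nf_space[simp]: "space (noise_filtration M B Y E s) = space M"
  unfolding noise_filtration_def using gen_sigma_Pow by (simp add: space_measure_of_conv)

lemma nf_sets: "sets (noise_filtration M B Y E s) = gen_sigma M (\<lambda>(k::bool, r). if k then B r else jump_part E Y r) (UNIV \<times> {0..s})"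
proof -
  have "sets (noise_filtration M B Y E s) = sigma_sets (space M) (gen_sigma M (\<lambda>(k::bool, r). if k then B r else jump_part E Y r) (UNIV \<times> {0..s}))"
    unfolding noise_filtration_def by (rule sets_measure_of[OF gen_sigma_Pow])
  also have "\<dots> = gen_sigma M (\<lambda>(k::bool, r). if k then B r else jump_part E Y r) (UNIV \<times> {0..s})"
    unfolding gen_sigma_def by (rule sigma_sets_sigma_sets_eq[OF nf_gen_Pow])
  finally show ?thesis .
qed

lemma nf_mono: "s1 \<le> s2 \<Longrightarrow> sets (noise_filtration M B Y E s1) \<subseteq> sets (noise_filtration M B Y E s2)"
  unfolding nf_sets gen_sigma_def by (intro sigma_sets_mono' UN_mono) auto

lemma nf_subalg_mono: assumes "s1 \<le> s2" shows "subalgebra (noise_filtration M B Y E s2) (noise_filtration M B Y E s1)"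
  unfolding subalgebra_def using nf_mono[OF assms, of M B Y E] by auto

lemma nf_meas_mono: "f \<in> borel_measurable (noise_filtration M B Y E s1) \<Longrightarrow> s1 \<le> s2 \<Longrightarrow> f \<in> borel_measurable (noise_filtration M B Y E s2)"
  using measurable_from_subalg[OF nf_subalg_mono] by blast

lemma nf_B: assumes "0 \<le> r" "r \<le> s" shows "B r \<in> borel_measurable (noise_filtration M B Y E s)"
proof (rule measurableI)
  fix A :: "real set" assume A: "A \<in> sets borel"
  have "B r -` A \<inter> space M \<in> (\<Union>i\<in>UNIV \<times> {0..s}. {(\<lambda>(k::bool, r). if k then B r else jump_part E Y r) i -` A \<inter> space M | A. A \<in> sets (borel::real measure)})"
    using assms A by (intro UN_I[of "(True, r)"]) auto
  then show "B r -` A \<inter> space (noise_filtration M B Y E s) \<in> sets (noise_filtration M B Y E s)"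
    unfolding nf_sets gen_sigma_def by auto
qed simp

lemma nf_subalg:
  assumes mB: "\<And>r. B r \<in> borel_measurable M" and mY: "\<And>i. Y i \<in> borel_measurable M" and mE: "\<And>i. E i \<in> borel_measurable M"
  shows "subalgebra M (noise_filtration M B Y E s)"
proof -
  have mJ: "jump_part E Y r \<in> borel_measurable M" for r by (rule jump_part_measurable[OF mY mE])
  have "gen_sigma M (\<lambda>(k::bool, r). if k then B r else jump_part E Y r) (UNIV \<times> {0..s}) \<subseteq> sets M"
    unfolding gen_sigma_def using mB mJ by (intro sets.sigma_sets_subset) (auto split: if_splits)
  then show ?thesis unfolding subalgebra_def nf_sets by simp
qed

context prob_space begin

lemma riemann_mgf:
  fixes X :: "real \<Rightarrow> 'a \<Rightarrow> real" and \<sigma> :: "real \<Rightarrow> real"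
  assumes BM: "std_brownian_motion M B"
    and ind3: "indep_sets (\<lambda>k::nat. if k = 0 then gen_sigma M B {0..}
                 else if k = 1 then gen_sigma M Y UNIV else gen_sigma M E UNIV) {0, 1, 2}"
    and mY: "\<And>i. Y i \<in> borel_measurable M" and mE: "\<And>i. E i \<in> borel_measurable M"
    and adapt: "adapted_completed M (noise_filtration M B Y E) X"
    and m\<sigma>: "\<sigma> \<in> borel_measurable borel" and S: "\<And>y. \<bar>\<sigma> y\<bar> \<le> S"
    and t: "t > 0"
  shows "(\<integral>\<^sup>+\<omega>. ennreal (exp (\<theta> * ito_riemann_sum \<sigma> X B t n \<omega>)) \<partial>M) \<le> ennreal (exp (\<theta>^2 * S^2 * t / 2))"
proof -
  note [measurable] = m\<sigma>
  have mB: "B r \<in> borel_measurable M" for r using BM unfolding std_brownian_motion_def by blast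
  define tk where "tk k = real k * t / 2^n" for k
  have tk0: "tk k \<ge> 0" for k using t unfolding tk_def by simp
  have tkmono: "tk j \<le> tk k" if "j \<le> k" for j k using t that unfolding tk_def by (simp add: divide_right_mono mult_right_mono)
  have tkdiff: "tk (Suc k) - tk k = t / 2^n" for k unfolding tk_def by (simp add: field_simps)
  have tkless: "tk k < tk (Suc k)" for k
  proof -
    have "t / 2^n > 0" using t by simp
    then show ?thesis using tkdiff[of k] by linarith
  qed
  have "\<forall>k. \<exists>Z. Z \<in> borel_measurable (noise_filtration M B Y E (tk k)) \<and> (AE \<omega> in M. X (tk k) \<omega> = Z \<omega>)"
    using adapt tk0 unfolding adapted_completed_def by blast
  then obtain Z where Zm: "\<And>k. Z k \<in> borel_measurable (noise_filtration M B Y E (tk k))"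
    and ZAE: "\<And>k. AE \<omega> in M. X (tk k) \<omega> = Z k \<omega>"
    by metis
  define R where "R k \<omega> = (\<Sum>j<k. \<sigma> (Z j \<omega>) * (B (tk (Suc j)) \<omega> - B (tk j) \<omega>))" for k \<omega>
  have Rm: "R k \<in> borel_measurable (noise_filtration M B Y E (tk k))" for k
  proof -
    have "(\<lambda>\<omega>. \<sigma> (Z j \<omega>) * (B (tk (Suc j)) \<omega> - B (tk j) \<omega>)) \<in> borel_measurable (noise_filtration M B Y E (tk k))"
      if "j < k" for j
    proof -
      have [measurable]: "Z j \<in> borel_measurable (noise_filtration M B Y E (tk k))"
        using nf_meas_mono[OF Zm tkmono[of j k]] that by simp
      have [measurable]: "B (tk (Suc j)) \<in> borel_measurable (noise_filtration M B Y E (tk k))"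
        using nf_B[OF tk0 tkmono[of "Suc j" k]] that by simp
      have [measurable]: "B (tk j) \<in> borel_measurable (noise_filtration M B Y E (tk k))"
        using nf_B[OF tk0 tkmono[of j k]] that by simp
      show ?thesis by measurable
    qed
    then show ?thesis unfolding R_def[abs_def] by (intro borel_measurable_sum) auto
  qed
  have step: "(\<integral>\<^sup>+\<omega>. ennreal (exp (\<theta> * R k \<omega>)) \<partial>M) \<le> ennreal (exp (\<theta>^2 * S^2 * tk k / 2))" for k
  proof (induction k)
    case 0
    then show ?case by (simp add: R_def tk_def emeasure_space_1)
  next
    case (Suc k)
    let ?F = "noise_filtration M B Y E (tk k)"
    have sub: "subalgebra M ?F" by (rule nf_subalg[OF mB mY mE])
    have ind: "indep_set (sets ?F) {(\<lambda>\<omega>. B (tk (Suc k)) \<omega> - B (tk k) \<omega>) -` H \<inter> space M | H. H \<in> sets borel}"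
      by (rule noise_indep[OF BM ind3 mY mE tk0 tkless])
    have DD: "distributed M lborel (\<lambda>\<omega>. B (tk (Suc k)) \<omega> - B (tk k) \<omega>) (normal_density 0 (sqrt (t / 2^n)))"
      using BM tk0[of k] tkless[of k] tkdiff[of k] unfolding std_brownian_motion_def by metis
    have Wm: "(\<lambda>\<omega>. exp (\<theta> * R k \<omega>)) \<in> borel_measurable ?F" using Rm[of k] by measurable
    have Vm: "(\<lambda>\<omega>. \<sigma> (Z k \<omega>)) \<in> borel_measurable ?F" using Zm[of k] by measurable
    have "(\<integral>\<^sup>+\<omega>. ennreal (exp (\<theta> * R (Suc k) \<omega>)) \<partial>M)
        = (\<integral>\<^sup>+\<omega>. ennreal (exp (\<theta> * R k \<omega>)) * ennreal (exp (\<theta> * \<sigma> (Z k \<omega>) * (B (tk (Suc k)) \<omega> - B (tk k) \<omega>))) \<partial>M)"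
      by (intro nn_integral_cong) (simp add: R_def ennreal_mult[symmetric] exp_add[symmetric] algebra_simps)
    also have "\<dots> \<le> ennreal (exp (\<theta>^2 * S^2 * (t / 2^n) / 2)) * (\<integral>\<^sup>+\<omega>. ennreal (exp (\<theta> * R k \<omega>)) \<partial>M)"
      by (rule mgf_step[OF sub ind DD _ Wm Vm S]) (use t in simp)
    also have "\<dots> \<le> ennreal (exp (\<theta>^2 * S^2 * (t / 2^n) / 2)) * ennreal (exp (\<theta>^2 * S^2 * tk k / 2))"
      by (intro mult_left_mono Suc.IH) simp
    also have "\<dots> = ennreal (exp (\<theta>^2 * S^2 * tk (Suc k) / 2))"
    proof -
      have "\<theta>^2 * S^2 * (t / 2^n) / 2 + \<theta>^2 * S^2 * tk k / 2 = \<theta>^2 * S^2 * tk (Suc k) / 2"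
      proof -
        have e: "tk (Suc k) = tk k + t / 2^n" using tkdiff[of k] by simp
        show ?thesis unfolding e by (simp add: algebra_simps add_divide_distrib)
      qed
      then show ?thesis by (simp add: ennreal_mult[symmetric] exp_add[symmetric])
    qed
    finally show ?case .
  qed
  have AEeq: "AE \<omega> in M. ito_riemann_sum \<sigma> X B t n \<omega> = R (2^n) \<omega>"
  proof -
    have "AE \<omega> in M. \<forall>k. X (tk k) \<omega> = Z k \<omega>" using ZAE by (simp add: AE_all_countable)
    then show ?thesis
    proof eventually_elim
      case (elim \<omega>)
      then show ?case unfolding ito_riemann_sum_def R_def tk_def by simp
    qed
  qed
  have "tk (2^n) = t" unfolding tk_def by simp
  then have "(\<integral>\<^sup>+\<omega>. ennreal (exp (\<theta> * R (2^n) \<omega>)) \<partial>M) \<le> ennreal (exp (\<theta>^2 * S^2 * t / 2))"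
    using step[of "2^n"] by simp
  moreover have "(\<integral>\<^sup>+\<omega>. ennreal (exp (\<theta> * ito_riemann_sum \<sigma> X B t n \<omega>)) \<partial>M) = (\<integral>\<^sup>+\<omega>. ennreal (exp (\<theta> * R (2^n) \<omega>)) \<partial>M)"
    using AEeq by (intro nn_integral_cong_AE) auto
  ultimately show ?thesis by simp
qed

end

lemma lint_bound:
  fixes b :: "real \<Rightarrow> real"
  assumes t: "t \<ge> 0" and bb: "\<And>y. \<bar>b y\<bar> \<le> Bb"
  shows "\<bar>LINT s:{0..t}|lborel. b (g s)\<bar> \<le> Bb * t"
proof -
  have Bb: "Bb \<ge> 0" using bb[of 0] by linarith
  let ?f = "\<lambda>s. indicator {0..t} s *\<^sub>R b (g s)"
  show ?thesis
  proof (cases "integrable lborel ?f")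
    case True
    have "ennreal (norm (integral\<^sup>L lborel ?f)) \<le> (\<integral>\<^sup>+s. norm (?f s) \<partial>lborel)"
      using integral_norm_bound_ennreal[OF True] by simp
    also have "\<dots> \<le> (\<integral>\<^sup>+s. ennreal Bb * indicator {0..t} s \<partial>lborel)"
      by (intro nn_integral_mono) (auto simp: indicator_def bb intro!: ennreal_leI)
    also have "\<dots> = ennreal Bb * emeasure lborel {0..t}"
      by (rule nn_integral_cmult_indicator) simp
    also have "\<dots> = ennreal (Bb * t)" using t Bb by (simp add: ennreal_mult)
    finally have "norm (integral\<^sup>L lborel ?f) \<le> Bb * t" using t Bb by (simp add: ennreal_le_iff)
    then show ?thesis by (simp add: set_lebesgue_integral_def)
  next
    case False
    then show ?thesis using t Bb by (simp add: set_lebesgue_integral_def not_integrable_integral_eq)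
  qed
qed

lemma cadlag_right_seq:
  fixes f :: "real \<Rightarrow> real"
  assumes cad: "cadlag_on_nonneg f" and s: "s \<ge> 0"
  shows "(\<lambda>m. f (real_of_int \<lceil>s * 2^m\<rceil> / 2^m)) \<longlonglongrightarrow> f s"
proof (rule tendstoI)
  fix e :: real assume e: "e > 0"
  have "(f \<longlongrightarrow> f s) (at_right s)" using cad s unfolding cadlag_on_nonneg_def continuous_within by blast
  then have "eventually (\<lambda>y. dist (f y) (f s) < e) (at_right s)" using e by (rule tendstoD)
  then obtain d where d: "d > s" and dP: "\<And>y. y > s \<Longrightarrow> y < d \<Longrightarrow> dist (f y) (f s) < e"
    using eventually_at_right[of s "s+1"] by auto
  obtain N where N: "(1/2::real)^N < d - s" using real_arch_pow_inv[of "d - s" "1/2"] d by auto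
  show "eventually (\<lambda>m. dist (f (real_of_int \<lceil>s * 2^m\<rceil> / 2^m)) (f s) < e) sequentially"
    unfolding eventually_sequentially
  proof (intro exI allI impI)
    fix m assume m: "N \<le> m"
    let ?c = "real_of_int \<lceil>s * 2^m\<rceil> / 2^m"
    have p: "(2::real)^m > 0" by simp
    have c1: "s \<le> ?c" using p by (simp add: le_divide_eq)
    have "real_of_int \<lceil>s * 2^m\<rceil> < s * 2^m + 1" by linarith
    then have "?c < s + 1 / 2^m" using p by (simp add: divide_less_eq distrib_right)
    moreover have "(1/2::real)^m \<le> (1/2)^N" using m by (intro power_decreasing) auto
    ultimately have c2: "?c < d" using N by (simp add: power_one_over)
    show "dist (f ?c) (f s) < e"
    proof (cases "?c = s")
      case True then show ?thesis using e by simp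
    next
      case False then show ?thesis using c1 c2 dP by simp
    qed
  qed
qed

context prob_space begin

lemma drift_measurable:
  fixes X :: "real \<Rightarrow> 'a \<Rightarrow> real" and b :: "real \<Rightarrow> real"
  assumes mX: "\<And>r. X r \<in> borel_measurable M" and cad: "\<And>\<omega>. \<omega> \<in> space M \<Longrightarrow> cadlag_on_nonneg (\<lambda>r. X r \<omega>)"
    and bc: "continuous_on UNIV b"
  shows "(\<lambda>\<omega>. LINT s:{0..t}|lborel. b (X s \<omega>)) \<in> borel_measurable M"
proof -
  have bm[measurable]: "b \<in> borel_measurable borel" using bc by (rule borel_measurable_continuous_onI)
  define g where "g z = indicator {0..t} (snd z) * b (X (snd z) (fst z))" for z :: "'a \<times> real"
  define gm where "gm m z = indicator {0..t} (snd z) * b (X (real_of_int \<lceil>snd z * (2::real)^m\<rceil> / 2^m) (fst z))" for m and z :: "'a \<times> real"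
  have gmm: "gm m \<in> borel_measurable (M \<Otimes>\<^sub>M lborel)" for m
  proof -
    have "(\<lambda>z. (\<lambda>i::int. \<lambda>z. indicator {0..t} (snd z) * b (X (real_of_int i / 2^m) (fst z))) (\<lceil>snd z * (2::real)^m\<rceil>) z)
       \<in> borel_measurable (M \<Otimes>\<^sub>M lborel)"
    proof (rule measurable_compose_countable[where f="\<lambda>i::int. \<lambda>z. indicator {0..t} (snd z) * b (X (real_of_int i / 2^m) (fst z))" and g="\<lambda>z. \<lceil>snd z * (2::real)^m\<rceil>"])
      fix i :: int
      have [measurable]: "X (real_of_int i / 2^m) \<in> borel_measurable M" by (rule mX)
      show "(\<lambda>z. indicator {0..t} (snd z) * b (X (real_of_int i / 2^m) (fst z))) \<in> borel_measurable (M \<Otimes>\<^sub>M lborel)"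
        by measurable
    next
      show "(\<lambda>z. \<lceil>snd z * (2::real)^m\<rceil>) \<in> measurable (M \<Otimes>\<^sub>M lborel) (count_space UNIV)"
        by measurable
    qed
    then show ?thesis unfolding gm_def by simp
  qed
  have gmeas: "g \<in> borel_measurable (M \<Otimes>\<^sub>M lborel)"
  proof (rule borel_measurable_LIMSEQ_real[OF _ gmm])
    fix z :: "'a \<times> real" assume z: "z \<in> space (M \<Otimes>\<^sub>M lborel)"
    then have \<omega>: "fst z \<in> space M" by (auto simp: space_pair_measure)
    show "(\<lambda>m. gm m z) \<longlonglongrightarrow> g z"
    proof (cases "snd z \<in> {0..t}")
      case True
      have "(\<lambda>m. X (real_of_int \<lceil>snd z * (2::real)^m\<rceil> / 2^m) (fst z)) \<longlonglongrightarrow> X (snd z) (fst z)"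
        using cadlag_right_seq[OF cad[OF \<omega>], of "snd z"] True by simp
      then have "(\<lambda>m. b (X (real_of_int \<lceil>snd z * (2::real)^m\<rceil> / 2^m) (fst z))) \<longlonglongrightarrow> b (X (snd z) (fst z))"
        using bc by (intro continuous_on_tendsto_compose[OF bc]) auto
      then show ?thesis using True unfolding gm_def g_def by simp
    next
      case False
      then show ?thesis unfolding gm_def g_def by simp
    qed
  qed
  have "(\<lambda>\<omega>. \<integral>s. (\<lambda>\<omega> s. g (\<omega>, s)) \<omega> s \<partial>lborel) \<in> borel_measurable M"
    by (rule lborel.borel_measurable_lebesgue_integral) (use gmeas in simp)
  then show ?thesis unfolding set_lebesgue_integral_def g_def by simp
qed

end

context prob_space begin

lemma ito_tail:
  fixes R :: "nat \<Rightarrow> 'a \<Rightarrow> real" and I :: "'a \<Rightarrow> real"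
  assumes Rm: "\<And>n. R n \<in> borel_measurable M" and Im: "I \<in> borel_measurable M"
    and mgf: "\<And>\<theta> n. (\<integral>\<^sup>+\<omega>. ennreal (exp (\<theta> * R n \<omega>)) \<partial>M) \<le> ennreal (exp (\<theta>^2 * v / 2))"
    and v: "v > 0" and a: "a > 0"
    and conv: "(\<lambda>n. measure M {\<omega>\<in>space M. \<bar>R n \<omega> - I \<omega>\<bar> > a/2}) \<longlonglongrightarrow> 0"
  shows "prob {\<omega>\<in>space M. \<bar>I \<omega>\<bar> > a} \<le> 2 * exp (- ((a/2)^2) / (2 * v))"
proof -
  note [measurable] = Rm Im
  let ?b = "2 * exp (- ((a/2)^2) / (2 * v))"
  have le: "prob {\<omega>\<in>space M. \<bar>I \<omega>\<bar> > a} \<le> ?b + measure M {\<omega>\<in>space M. \<bar>R n \<omega> - I \<omega>\<bar> > a/2}" for n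
  proof -
    have tail: "prob {\<omega>\<in>space M. \<bar>R n \<omega>\<bar> > a/2} \<le> ?b"
      using chernoff[OF Rm v, of "a/2"] mgf a by simp
    have "{\<omega>\<in>space M. \<bar>I \<omega>\<bar> > a} \<subseteq> {\<omega>\<in>space M. \<bar>R n \<omega>\<bar> > a/2} \<union> {\<omega>\<in>space M. \<bar>R n \<omega> - I \<omega>\<bar> > a/2}"
      by auto (smt (verit))
    then have "prob {\<omega>\<in>space M. \<bar>I \<omega>\<bar> > a} \<le> prob ({\<omega>\<in>space M. \<bar>R n \<omega>\<bar> > a/2} \<union> {\<omega>\<in>space M. \<bar>R n \<omega> - I \<omega>\<bar> > a/2})"
      using Rm Im by (intro finite_measure_mono) measurable
    also have "\<dots> \<le> prob {\<omega>\<in>space M. \<bar>R n \<omega>\<bar> > a/2} + prob {\<omega>\<in>space M. \<bar>R n \<omega> - I \<omega>\<bar> > a/2}"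
      using Rm Im by (intro measure_Un_le) measurable
    finally show ?thesis using tail by simp
  qed
  have "(\<lambda>n. ?b + measure M {\<omega>\<in>space M. \<bar>R n \<omega> - I \<omega>\<bar> > a/2}) \<longlonglongrightarrow> ?b + 0"
    by (intro tendsto_add tendsto_const conv)
  then have "(\<lambda>n. ?b + measure M {\<omega>\<in>space M. \<bar>R n \<omega> - I \<omega>\<bar> > a/2}) \<longlonglongrightarrow> ?b" by simp
  then show ?thesis by (rule LIMSEQ_le_const) (use le in auto)
qed

end

lemma exp_ge_sq16: assumes "x \<ge> (0::real)" shows "exp (x/2) \<ge> x^2/16"
proof -
  have "1 + x/4 \<le> exp (x/4)" by (rule exp_ge_add_one_self)
  then have "(1 + x/4)^2 \<le> (exp (x/4))^2" using assms by (intro power_mono) auto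
  also have "(exp (x/4))^2 = exp (x/2)" by (simp add: power2_eq_square exp_add[symmetric])
  finally have "(1 + x/4)^2 \<le> exp (x/2)" .
  moreover have "x^2/16 \<le> (1 + x/4)^2" using assms by (simp add: power2_eq_square field_simps)
  ultimately show ?thesis by linarith
qed

lemma final_ineq:
  fixes S \<beta> l Bb r t :: real
  assumes S: "S > 0" and b: "\<beta> > 0" and l: "l > 0"
  defines "k \<equiv> min (1/(72 * S^2)) (min (1/2) (1/(36*\<beta>)))"
  defines "c \<equiv> k / 2"
  defines "L0 \<equiv> max 1 (max (16 * exp 1 * l) (2 / c^2))"
  assumes r: "r > 0" and t: "t > 0" and L: "ln (r/t) \<ge> L0"
    and small: "exp (- c * (r * sqrt (ln (r/t)))) < 1/2"
  shows "2 * exp (- ((r/3/2)^2) / (2 * (S^2 * t)))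
     + (exp (((nat \<lfloor>r / sqrt (ln (r/t))\<rfloor> + 1) / t) * t) * (l/(l+(nat \<lfloor>r / sqrt (ln (r/t))\<rfloor> + 1) / t))^(Suc (nat \<lfloor>r / sqrt (ln (r/t))\<rfloor>))
        + real (nat \<lfloor>r / sqrt (ln (r/t))\<rfloor>) * (2 * exp (- ((r/3)^2) / (2 * (real (nat \<lfloor>r / sqrt (ln (r/t))\<rfloor>) * \<beta>)))))
     < 2 * exp (- c * (r * sqrt (ln (r/t))))"
proof -
  define L where "L = ln (r/t)"
  define w where "w = r * sqrt L"
  define q where "q = r / sqrt L"
  define n where "n = nat \<lfloor>q\<rfloor>"
  have kpos: "k > 0" unfolding k_def using S b by simp
  have cpos: "c > 0" unfolding c_def using kpos by simp
  have k1: "k \<le> 1/(72 * S^2)" and k2: "k \<le> 1/2" and k3: "k \<le> 1/(36*\<beta>)" unfolding k_def by auto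
  have L1: "L \<ge> 1" using L unfolding L_def L0_def by simp
  have Lel: "L \<ge> 16 * exp 1 * l" using L unfolding L_def L0_def by simp
  have Lc: "L \<ge> 2 / c^2" using L unfolding L_def L0_def by simp
  have LL: "L \<le> L^2" using L1 mult_right_mono[of 1 L L] by (simp add: power2_eq_square)
  have sL: "sqrt L > 0" "sqrt L \<le> L" "1 \<le> sqrt L"
    using L1 LL real_sqrt_le_mono[of 1 L] by (auto simp: real_sqrt_le_iff')
  have rt: "r / t = exp L" unfolding L_def using r t by simp
  have qpos: "q > 0" unfolding q_def using r sL by simp
  have wq: "w = q * L" unfolding w_def q_def using sL by (simp add: field_simps)
  have nq: "real n \<le> q" "q < real n + 1" unfolding n_def using qpos by linarith+
  have qw: "q \<le> w" unfolding wq using qpos L1 by simp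
  have wpos: "w > 0" using qpos qw by linarith
  have T1: "2 * exp (- ((r/3/2)^2) / (2 * (S^2 * t))) \<le> 2 * exp (- (k * w))"
  proof -
    have e1: "sqrt L \<le> exp L" using sL(2) exp_ge_add_one_self[of L] by linarith
    have "(r/3/2)^2 / (2 * (S^2 * t)) = r * (r / t) / (72 * S^2)" using t S by (simp add: power2_eq_square field_simps)
    also have "\<dots> \<ge> r * sqrt L / (72 * S^2)" using e1 r S unfolding rt by (intro divide_right_mono mult_left_mono) auto
    finally have "(r/3/2)^2 / (2 * (S^2 * t)) \<ge> w / (72 * S^2)" unfolding w_def .
    moreover have "k * w \<le> w / (72 * S^2)" using mult_right_mono[OF k1, of w] wpos by simp
    ultimately show ?thesis by simp
  qed
  have T2: "exp (((n + 1) / t) * t) * (l/(l+(n + 1) / t))^(Suc n) \<le> exp (- (k * w))"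
  proof -
    define base where "base = exp 1 * (l * t / (n+1))"
    have bpos: "base \<ge> 0" unfolding base_def using l t by simp
    have "exp (((n + 1) / t) * t) * (l/(l+(n + 1) / t))^(Suc n) \<le> exp (n+1) * (l * t / (n+1))^(Suc n)"
    proof (intro mult_mono power_mono)
      have tp: "(n+1)/t > 0" using t by simp
      have pp: "0 < (l + (n+1)/t) * ((n+1)/t)" using l tp by (intro mult_pos_pos) auto
      have "l/(l+(n + 1) / t) \<le> l/((n+1)/t)"
        by (rule divide_left_mono[OF _ _ pp]) (use l in auto)
      then show "l/(l+(n + 1) / t) \<le> l * t / (n+1)" by simp
    qed (use t l in auto)
    also have "\<dots> = base^(Suc n)"
    proof -
      have e0: "exp (real (Suc n) * 1) = (exp 1)^(Suc n)" by (rule exp_of_nat_mult)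
      have e: "(exp 1)^(Suc n) = exp (n+1)" using e0 by (simp add: add.commute)
      have "base = exp 1 * (l * t / (n+1))" unfolding base_def by simp
      then have "base^(Suc n) = (exp 1)^(Suc n) * (l * t / (n+1))^(Suc n)" by (simp only: power_mult_distrib)
      then show ?thesis using e by simp
    qed
    also have "\<dots> \<le> (exp (- L/2))^(Suc n)"
    proof (intro power_mono bpos)
      have "l * t / (n+1) \<le> l * t / q" using nq qpos l t by (intro divide_left_mono) auto
      then have "exp 1 * (l * t / (n+1)) \<le> exp 1 * (l * t / q)" by (intro mult_left_mono) auto
      then have "base \<le> exp 1 * l * t / q" unfolding base_def by (simp add: mult.assoc)
      also have "\<dots> = exp 1 * l * sqrt L / exp L" unfolding q_def using rt t r sL by (simp add: field_simps)
      also have "\<dots> \<le> exp (- L/2)"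
      proof -
        have "exp 1 * l * sqrt L \<le> exp 1 * l * L" using sL l by simp
        also have "\<dots> \<le> L * L / 16" using Lel L1 by (simp add: field_simps)
        also have "\<dots> \<le> exp (L/2)" using exp_ge_sq16[of L] L1 by (simp add: power2_eq_square)
        finally have "exp 1 * l * sqrt L \<le> exp (L/2)" .
        then have "exp 1 * l * sqrt L / exp L \<le> exp (L/2) / exp L" by (intro divide_right_mono) auto
        also have "exp (L/2) / exp L = exp (- L/2)" by (simp add: exp_diff[symmetric])
        finally show ?thesis .
      qed
      finally show "base \<le> exp (- L/2)" .
    qed
    also have "\<dots> = exp (- L/2 * (n+1))"
    proof -
      have "(exp (- L/2))^(Suc n) = exp (real (Suc n) * (- L/2))" by (rule exp_of_nat_mult[symmetric])
      also have "real (Suc n) * (- L/2) = - L/2 * (n+1)" by (simp add: algebra_simps)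
      finally show ?thesis .
    qed
    also have "\<dots> \<le> exp (- L/2 * q)" using nq L1 by simp
    also have "- L/2 * q = - (w/2)" unfolding wq by simp
    also have "exp (- (w/2)) \<le> exp (- (k * w))" using mult_right_mono[OF k2, of w] wpos by simp
    finally show ?thesis .
  qed
  have T3: "real n * (2 * exp (- ((r/3)^2) / (2 * (real n * \<beta>)))) \<le> (1/2) * exp (- (c * w))"
  proof (cases "n = 0")
    case True then show ?thesis by simp
  next
    case False
    then have n1: "real n \<ge> 1" by simp
    have q1: "q \<ge> 1" using n1 nq by linarith
    have wL: "w \<ge> L" unfolding wq using q1 L1 by simp
    have "(r/3)^2 / (2 * (real n * \<beta>)) \<ge> (r/3)^2 / (2 * (q * \<beta>))"
      using nq n1 b by (intro divide_left_mono mult_left_mono mult_right_mono) auto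
    also have "(r/3)^2 / (2 * (q * \<beta>)) = w / (18 * \<beta>)"
      unfolding w_def q_def using sL b by (simp add: power2_eq_square field_simps)
    finally have e: "(r/3)^2 / (2 * (real n * \<beta>)) \<ge> w / (18 * \<beta>)" .
    have "2 * k * w \<le> w / (18 * \<beta>)" using mult_right_mono[OF k3, of "2*w"] wpos b by (simp add: field_simps)
    then have "exp (- ((r/3)^2) / (2 * (real n * \<beta>))) \<le> exp (- (4 * c * w))" using e unfolding c_def by simp
    then have "real n * (2 * exp (- ((r/3)^2) / (2 * (real n * \<beta>)))) \<le> w * (2 * exp (- (4 * c * w)))"
      using nq qw by (intro mult_mono) auto
    also have "\<dots> \<le> (1/2) * exp (- (c * w))"
    proof -
      have "(1 + 3 * c * w / 2)^2 \<le> (exp (3 * c * w / 2))^2"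
        using cpos wpos exp_ge_add_one_self[of "3 * c * w / 2"] by (intro power_mono) auto
      also have "(exp (3 * c * w / 2))^2 = exp (3 * c * w)" by (simp add: power2_eq_square exp_add[symmetric])
      finally have A: "(1 + 3 * c * w / 2)^2 \<le> exp (3 * c * w)" .
      have "9 * c^2 * w^2 / 4 \<le> (1 + 3 * c * w / 2)^2" using cpos wpos by (simp add: power2_eq_square field_simps)
      moreover have "4 * w \<le> 9 * c^2 * w^2 / 4"
      proof -
        have "w \<ge> 2 / c^2" using wL Lc by linarith
        then have "c^2 * w \<ge> 2" using cpos by (simp add: field_simps)
        then have "9 * c^2 * w * w / 4 \<ge> 4 * w" using wpos by (simp add: field_simps)
        then show ?thesis by (simp add: power2_eq_square mult_ac)
      qed
      ultimately have "4 * w \<le> exp (3 * c * w)" using A by linarith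
      then have "w * (2 * exp (- (4 * c * w))) * exp (4 * c * w) \<le> (1/2) * exp (- (c * w)) * exp (4 * c * w)"
        by (simp add: exp_add[symmetric] exp_minus_inverse mult_ac)
      then show ?thesis by simp
    qed
    finally show ?thesis .
  qed
  have ecw: "exp (- (c * w)) < 1/2" using small unfolding w_def L_def by simp
  have kw: "exp (- (k * w)) = exp (- (c * w)) * exp (- (c * w))" unfolding c_def by (simp add: exp_add[symmetric])
  have "2 * exp (- (k * w)) + exp (- (k * w)) + (1/2) * exp (- (c * w)) < 2 * exp (- (c * w))"
  proof -
    have p: "exp (- (c * w)) > 0" by simp
    have h: "exp (- (c * w)) * exp (- (c * w)) < (1/2) * exp (- (c * w))"
      using ecw p by (intro mult_strict_right_mono) auto
    show ?thesis unfolding kw using h by linarith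
  qed
  note sum = this
  show ?thesis unfolding L_def[symmetric] q_def[symmetric] n_def[symmetric] w_def[symmetric] mult_minus_left
    using sum T1 T2 T3 by linarith
qed


lemma C2_bounded_facts:
  assumes "C2_bounded f"
  shows "continuous_on UNIV f" "\<exists>B. \<forall>y. \<bar>f y\<bar> \<le> B"
proof -
  obtain f1 f2 where d: "\<forall>y. (f has_real_derivative f1 y) (at y)" and bd: "bounded (range f)"
    using assms unfolding C2_bounded_def by blast
  show "continuous_on UNIV f"
    by (intro continuous_at_imp_continuous_on ballI DERIV_isCont) (use d in blast)
  obtain a where "\<forall>x\<in>range f. norm x \<le> a" using bd unfolding bounded_iff by blast
  then show "\<exists>B. \<forall>y. \<bar>f y\<bar> \<le> B" by auto
qed

theorem mainTheorem6:
  fixes M :: "'a measure"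
    and B :: "real \<Rightarrow> 'a \<Rightarrow> real"
    and Y E :: "nat \<Rightarrow> 'a \<Rightarrow> real"
    and \<sigma> b :: "real \<Rightarrow> real"
    and l \<beta> \<rho> :: real
    and X :: "real \<Rightarrow> real \<Rightarrow> 'a \<Rightarrow> real"
  assumes "\<beta> > 0"
    and "jump_setting M B Y E (normal_density 0 (sqrt \<beta>)) l"
    and "C2_bounded \<sigma>" and "C2_bounded b"
    and "\<rho> > 0" and "\<forall>y. \<bar>\<sigma> y\<bar> \<ge> \<rho>"
    and "\<forall>x. sde_solution M B Y E \<sigma> b x (X x)"
  shows "\<exists>c>0. \<exists>K>0. \<forall>t>0. \<forall>x y::real. \<bar>y - x\<bar> / t \<ge> K \<longrightarrow>
           measure M {\<omega>\<in>space M. \<bar>X x t \<omega> - x\<bar> > \<bar>y - x\<bar>}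
             \<le> 2 * exp (- c * \<bar>y - x\<bar> * sqrt (ln (\<bar>y - x\<bar> / t)))"
proof -
  note js = assms(2)[unfolded jump_setting_def]
  interpret prob_space M using js by blast
  have bpos: "\<beta> > 0" by (rule assms(1))
  have lpos: "l > 0" using js by blast
  have BM: "std_brownian_motion M B" using js by blast
  have IY: "indep_vars (\<lambda>_. borel) Y UNIV" using js by blast
  have DY: "\<And>i. distributed M lborel (Y i) (normal_density 0 (sqrt \<beta>))" using js by blast
  have IE: "indep_vars (\<lambda>_. borel) E UNIV" using js by blast
  have DE: "\<And>i. distributed M lborel (E i) (exponential_density l)" using js by blast
  have ind3: "indep_sets (\<lambda>k::nat. if k = 0 then gen_sigma M B {0..}
                 else if k = 1 then gen_sigma M Y UNIV else gen_sigma M E UNIV) {0, 1, 2}" using js by blast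
  have mY: "\<And>i. Y i \<in> borel_measurable M" using DY by (simp add: distributed_def)
  have mE: "\<And>i. E i \<in> borel_measurable M" using DE by (simp add: distributed_def)
  have mB: "\<And>r. B r \<in> borel_measurable M" using BM unfolding std_brownian_motion_def by blast
  have \<sigma>c: "continuous_on UNIV \<sigma>" using C2_bounded_facts(1)[OF assms(3)] .
  have bc: "continuous_on UNIV b" using C2_bounded_facts(1)[OF assms(4)] .
  obtain S0 where S0: "\<forall>y. \<bar>\<sigma> y\<bar> \<le> S0" using C2_bounded_facts(2)[OF assms(3)] by blast
  obtain Bb0 where Bb0: "\<forall>y. \<bar>b y\<bar> \<le> Bb0" using C2_bounded_facts(2)[OF assms(4)] by blast
  define S where "S = max S0 1"
  define Bb where "Bb = max Bb0 0"
  have Spos: "S > 0" unfolding S_def by simp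
  have Sb: "\<And>y. \<bar>\<sigma> y\<bar> \<le> S" using S0 unfolding S_def by (meson max.cobounded1 order_trans)
  have Bbb: "\<And>y. \<bar>b y\<bar> \<le> Bb" using Bb0 unfolding Bb_def by (meson max.cobounded1 order_trans)
  have Bbpos: "Bb \<ge> 0" unfolding Bb_def by simp
  have m\<sigma>[measurable]: "\<sigma> \<in> borel_measurable borel" using \<sigma>c by (rule borel_measurable_continuous_onI)
  define k where "k = min (1/(72 * S^2)) (min (1/2) (1/(36*\<beta>)))"
  define c where "c = k / 2"
  define L0 where "L0 = max 1 (max (16 * exp 1 * l) (2 / c^2))"
  define K where "K = exp (max L0 (3 * Bb))"
  have kpos: "k > 0" unfolding k_def using Spos bpos by simp
  have cpos: "c > 0" unfolding c_def using kpos by simp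
  have Kpos: "K > 0" unfolding K_def by simp
  have main: "\<forall>t>0. \<forall>x y::real. \<bar>y - x\<bar> / t \<ge> K \<longrightarrow>
           measure M {\<omega>\<in>space M. \<bar>X x t \<omega> - x\<bar> > \<bar>y - x\<bar>}
             \<le> 2 * exp (- c * \<bar>y - x\<bar> * sqrt (ln (\<bar>y - x\<bar> / t)))"
  proof (intro allI impI)
    fix t x y :: real
    assume t: "t > 0" and rK: "\<bar>y - x\<bar> / t \<ge> K"
    define r where "r = \<bar>y - x\<bar>"
    have rt: "r / t \<ge> K" using rK unfolding r_def .
    have rtpos: "r / t > 0" using rt Kpos by linarith
    have r: "r > 0" using rtpos t by (simp add: zero_less_divide_iff)
    have lnK: "ln (r/t) \<ge> max L0 (3 * Bb)"
    proof -
      have "ln K \<le> ln (r/t)" using rt Kpos by simp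
      then show ?thesis unfolding K_def by simp
    qed
    have L: "ln (r/t) \<ge> L0" using lnK by simp
    have Bbt: "Bb * t \<le> r / 3"
    proof -
      have "3 * Bb \<le> exp (3 * Bb)" using exp_ge_add_one_self[of "3 * Bb"] by linarith
      also have "exp (3 * Bb) \<le> K" unfolding K_def by simp
      also have "\<dots> \<le> r / t" by (rule rt)
      finally have "3 * Bb \<le> r / t" .
      then show ?thesis using t by (simp add: field_simps)
    qed
    let ?P = "measure M {\<omega>\<in>space M. \<bar>X x t \<omega> - x\<bar> > r}"
    let ?RHS = "2 * exp (- c * (r * sqrt (ln (r / t))))"
    have goal: "?P \<le> ?RHS"
    proof (cases "?RHS \<ge> 1")
      case True
      have "?P \<le> 1" by (rule prob_le_1)
      then show ?thesis using True by linarith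
    next
      case False
      then have small: "exp (- c * (r * sqrt (ln (r/t)))) < 1/2" by simp
      have sde: "sde_solution M B Y E \<sigma> b x (X x)" using assms(7) by blast
      have mX: "\<And>s. X x s \<in> borel_measurable M" using sde unfolding sde_solution_def by blast
      have cad: "\<And>\<omega>. \<omega> \<in> space M \<Longrightarrow> cadlag_on_nonneg (\<lambda>s. X x s \<omega>)" using sde unfolding sde_solution_def by blast
      have adapt: "adapted_completed M (noise_filtration M B Y E) (X x)" using sde unfolding sde_solution_def by blast
      have conv: "\<And>\<epsilon>. \<epsilon> > 0 \<Longrightarrow> (\<lambda>n. measure M {\<omega>\<in>space M.
            \<bar>ito_riemann_sum \<sigma> (X x) B t n \<omega> -
             (X x t \<omega> - x - (LINT s:{0..t}|lborel. b (X x s \<omega>)) - jump_part E Y t \<omega>)\<bar> > \<epsilon>}) \<longlonglongrightarrow> 0"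
        using sde t unfolding sde_solution_def by auto
      define Dr where "Dr \<omega> = (LINT s:{0..t}|lborel. b (X x s \<omega>))" for \<omega>
      define J where "J \<omega> = jump_part E Y t \<omega>" for \<omega>
      define I where "I \<omega> = X x t \<omega> - x - Dr \<omega> - J \<omega>" for \<omega>
      have Drm[measurable]: "Dr \<in> borel_measurable M" unfolding Dr_def[abs_def]
        by (rule drift_measurable[OF mX cad bc])
      have Jm[measurable]: "J \<in> borel_measurable M" unfolding J_def[abs_def] by (rule jump_part_measurable[OF mY mE])
      have mXt[measurable]: "X x t \<in> borel_measurable M" by (rule mX)
      have Im[measurable]: "I \<in> borel_measurable M" unfolding I_def[abs_def] by measurable
      have Rm: "(ito_riemann_sum \<sigma> (X x) B t n) \<in> borel_measurable M" for n
      proof -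
        have [measurable]: "X x s \<in> borel_measurable M" "B s \<in> borel_measurable M" for s using mX mB by auto
        show ?thesis unfolding ito_riemann_sum_def[abs_def] by measurable
      qed
      have P1: "prob {\<omega>\<in>space M. \<bar>I \<omega>\<bar> > r/3} \<le> 2 * exp (- ((r/3/2)^2) / (2 * (S^2 * t)))"
      proof (rule ito_tail[OF Rm Im])
        fix \<theta> n
        show "(\<integral>\<^sup>+\<omega>. ennreal (exp (\<theta> * ito_riemann_sum \<sigma> (X x) B t n \<omega>)) \<partial>M) \<le> ennreal (exp (\<theta>^2 * (S^2 * t) / 2))"
          using riemann_mgf[OF BM ind3 mY mE adapt m\<sigma> Sb t, of \<theta> n] by (simp add: mult.assoc)
      next
        show "S^2 * t > 0" using Spos t by simp
        show "r/3 > 0" using r by simp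
        show "(\<lambda>n. measure M {\<omega>\<in>space M. \<bar>ito_riemann_sum \<sigma> (X x) B t n \<omega> - I \<omega>\<bar> > r/3/2}) \<longlonglongrightarrow> 0"
          using conv[of "r/3/2"] r unfolding I_def Dr_def J_def by simp
      qed
      define n where "n = nat \<lfloor>r / sqrt (ln (r/t))\<rfloor>"
      have P2: "prob {\<omega>\<in>space M. \<bar>J \<omega>\<bar> > r/3} \<le>
         exp ((real (n + 1) / t) * t) * (l/(l+real (n + 1) / t))^(Suc n) + real n * (2 * exp (- ((r/3)^2) / (2 * (real n * \<beta>))))"
        unfolding J_def by (rule jump_tail[OF IY DY IE DE lpos bpos]) (use r t in auto)
      have incl: "{\<omega>\<in>space M. \<bar>X x t \<omega> - x\<bar> > r} \<subseteq> {\<omega>\<in>space M. \<bar>I \<omega>\<bar> > r/3} \<union> {\<omega>\<in>space M. \<bar>J \<omega>\<bar> > r/3}"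
      proof
        fix \<omega> assume \<omega>: "\<omega> \<in> {\<omega>\<in>space M. \<bar>X x t \<omega> - x\<bar> > r}"
        have D: "\<bar>Dr \<omega>\<bar> \<le> Bb * t" unfolding Dr_def using lint_bound[of t b Bb] t Bbb by simp
        have "X x t \<omega> - x = I \<omega> + Dr \<omega> + J \<omega>" unfolding I_def by simp
        then show "\<omega> \<in> {\<omega>\<in>space M. \<bar>I \<omega>\<bar> > r/3} \<union> {\<omega>\<in>space M. \<bar>J \<omega>\<bar> > r/3}"
          using \<omega> D Bbt by auto
      qed
      have "?P \<le> prob ({\<omega>\<in>space M. \<bar>I \<omega>\<bar> > r/3} \<union> {\<omega>\<in>space M. \<bar>J \<omega>\<bar> > r/3})"
        using incl by (intro finite_measure_mono) measurable
      also have "\<dots> \<le> prob {\<omega>\<in>space M. \<bar>I \<omega>\<bar> > r/3} + prob {\<omega>\<in>space M. \<bar>J \<omega>\<bar> > r/3}"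
        by (intro measure_Un_le) measurable
      also have "\<dots> \<le> 2 * exp (- ((r/3/2)^2) / (2 * (S^2 * t))) +
         (exp ((real (n + 1) / t) * t) * (l/(l+real (n + 1) / t))^(Suc n) + real n * (2 * exp (- ((r/3)^2) / (2 * (real n * \<beta>)))))"
        using P1 P2 by (rule add_mono)
      also have "\<dots> < ?RHS"
        unfolding n_def using final_ineq[OF Spos bpos lpos r t L[unfolded L0_def c_def k_def] small[unfolded c_def k_def]]
        unfolding c_def k_def by simp
      finally show ?thesis by simp
    qed
    then show "measure M {\<omega>\<in>space M. \<bar>X x t \<omega> - x\<bar> > \<bar>y - x\<bar>}
             \<le> 2 * exp (- c * \<bar>y - x\<bar> * sqrt (ln (\<bar>y - x\<bar> / t)))"
      unfolding r_def by (simp add: mult.assoc)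
  qed
  show ?thesis using main cpos Kpos by blast
qed


end
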